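(* Let $G$ be a cograph. The following procedure always returns a recursively minimal coloring of $G$: Let $(T_G,t_G)$ be the discriminating cotree of $G$. Initially assign pairwise distinct colors to all vertices of $G$. Then traverse the inner vertices $v$ of $T_G$ from bottom to top (every vertex after all its descendants); whenever $t_G(v)=0$, let $\mathcal{G}$ be the set of connected components of $G(v)$, choose $G^*\in\mathcal{G}$ with maximum chromatic number $\chi(G^* )$, set $S:=\sigma(V(G^* ))$, and for every $G_j\in\mathcal{G}$ with $G_j\neq G^*$ choose (arbitrarily) an injective map $\phi:\sigma(V(G_j))\to S$ and replace $\sigma(x)$ by $\phi(\sigma(x))$ for all $x\in V(G_j)$; when $t_G(v)=1$ nothing is done. Moreover, every recursively minimal coloring of $G$ can be obtained as an output of this procedure for suitable choices made in it.
   Context: All graphs are finite, simple and undirected. A (proper vertex) coloring of $G=(V,E)$ is a surjective map $\sigma:V\to S$ with $\sigma(x)\neq\sigma(y)$ whenever $xy\in E$; $\chi(G)$ is the chromatic number. A cograph is a graph that is $K_1$, or a disjoint union of cographs, or a join of cographs. A cotree $(T,t)$ of a cograph $G$ is a rooted tree $T$ with leaf set $V$ and a labeling $t:V^0(T)\to\{0,1\}$ of its inner vertices such that for every inner vertex $u$, $G(u):=G[L(T(u))]$ (with $L(T(u))$ the leaves descending from $u$) is the disjoint union (if $t(u)=0$) or the join (if $t(u)=1$) of the graphs $G(v)$, $v$ a child of $u$. The discriminating cotree of $G$ is the unique cotree in which $t(u)\neq t(v)$ for every edge $uv$ of $T$ between two inner vertices. Color-minimal cographs are colored graphs $(G,\sigma)$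 ($\sigma$ a proper coloring) defined recursively: $(G,\sigma)$ is color-minimal if $|\sigma(V)|=\chi(G)$ and either $G=K_1$, or $G$ is the disjoint union, or the join, of at least two graphs $G_i$ such that each $(G_i,\sigma|_{V(G_i)})$ is a color-minimal cograph. A coloring $\sigma$ of $G$ is recursively minimal if $(G,\sigma)$ is a color-minimal cograph. *)

theory Defs
  imports Main
begin

text \<open>A finite simple graph is given by a finite vertex set V and a symmetric,
irreflexive edge relation E.  Induced subgraphs G[W] are (W, E).\<close>

definition graph :: "('a \<Rightarrow> 'a \<Rightarrow> bool) \<Rightarrow> 'a set \<Rightarrow> bool" where
  "graph E V \<longleftrightarrow> finite V \<and> (\<forall>x y. E x y \<longrightarrow> E y x) \<and> (\<forall>x. \<not> E x x)"

definition proper_coloring :: "('a \<Rightarrow> 'a \<Rightarrow> bool) \<Rightarrow> 'a set \<Rightarrow> ('a \<Rightarrow> 'c) \<Rightarrow> bool" where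
  "proper_coloring E V \<sigma> \<longleftrightarrow> (\<forall>x\<in>V. \<forall>y\<in>V. E x y \<longrightarrow> \<sigma> x \<noteq> \<sigma> y)"

definition chi :: "('a \<Rightarrow> 'a \<Rightarrow> bool) \<Rightarrow> 'a set \<Rightarrow> nat" where
  "chi E V = (LEAST k. \<exists>\<sigma> :: 'a \<Rightarrow> nat. proper_coloring E V \<sigma> \<and> card (\<sigma> ` V) = k)"

definition is_partition :: "'a set set \<Rightarrow> 'a set \<Rightarrow> bool" where
  "is_partition P V \<longleftrightarrow> (\<forall>W\<in>P. W \<noteq> {}) \<and> \<Union>P = V \<and>
     (\<forall>W1\<in>P. \<forall>W2\<in>P. W1 \<noteq> W2 \<longrightarrow> W1 \<inter> W2 = {})"

definition no_edges_between :: "('a \<Rightarrow> 'a \<Rightarrow> bool) \<Rightarrow> 'a set set \<Rightarrow> bool" where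
  "no_edges_between E P \<longleftrightarrow> (\<forall>W1\<in>P. \<forall>W2\<in>P. W1 \<noteq> W2 \<longrightarrow> (\<forall>x\<in>W1. \<forall>y\<in>W2. \<not> E x y))"

definition all_edges_between :: "('a \<Rightarrow> 'a \<Rightarrow> bool) \<Rightarrow> 'a set set \<Rightarrow> bool" where
  "all_edges_between E P \<longleftrightarrow> (\<forall>W1\<in>P. \<forall>W2\<in>P. W1 \<noteq> W2 \<longrightarrow> (\<forall>x\<in>W1. \<forall>y\<in>W2. E x y))"

inductive cograph :: "('a \<Rightarrow> 'a \<Rightarrow> bool) \<Rightarrow> 'a set \<Rightarrow> bool" for E where
  K1: "cograph E {x}"
| union: "\<lbrakk>is_partition P V; card P \<ge> 2; no_edges_between E P; \<forall>W\<in>P. cograph E W\<rbrakk>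
          \<Longrightarrow> cograph E V"
| join: "\<lbrakk>is_partition P V; card P \<ge> 2; all_edges_between E P; \<forall>W\<in>P. cograph E W\<rbrakk>
          \<Longrightarrow> cograph E V"

text \<open>Color-minimal cographs; the colored graph is (G[V], restriction of sigma to V).\<close>

inductive color_minimal :: "('a \<Rightarrow> 'a \<Rightarrow> bool) \<Rightarrow> ('a \<Rightarrow> 'c) \<Rightarrow> 'a set \<Rightarrow> bool"
  for E \<sigma> where
  K1: "color_minimal E \<sigma> {x}"
| union: "\<lbrakk>proper_coloring E V \<sigma>; card (\<sigma> ` V) = chi E V;
           is_partition P V; card P \<ge> 2; no_edges_between E P; \<forall>W\<in>P. color_minimal E \<sigma> W\<rbrakk>
          \<Longrightarrow> color_minimal E \<sigma> V"
| join: "\<lbrakk>proper_coloring E V \<sigma>; card (\<sigma> ` V) = chi E V;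
           is_partition P V; card P \<ge> 2; all_edges_between E P; \<forall>W\<in>P. color_minimal E \<sigma> W\<rbrakk>
          \<Longrightarrow> color_minimal E \<sigma> V"

abbreviation recursively_minimal :: "('a \<Rightarrow> 'a \<Rightarrow> bool) \<Rightarrow> 'a set \<Rightarrow> ('a \<Rightarrow> 'c) \<Rightarrow> bool" where
  "recursively_minimal E V \<sigma> \<equiv> color_minimal E \<sigma> V"

definition component :: "('a \<Rightarrow> 'a \<Rightarrow> bool) \<Rightarrow> 'a set \<Rightarrow> 'a \<Rightarrow> 'a set" where
  "component E W x = {y \<in> W. (x, y) \<in> {(a, b). a \<in> W \<and> b \<in> W \<and> E a b}\<^sup>*}"

definition components :: "('a \<Rightarrow> 'a \<Rightarrow> bool) \<Rightarrow> 'a set \<Rightarrow> 'a set set" where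
  "components E W = component E W ` W"

text \<open>Rooted trees with leaves labelled by vertices and inner vertices labelled
by a boolean: True = 1 (join), False = 0 (disjoint union).\<close>

datatype 'a cotree = Leaf 'a | Inner bool "'a cotree list"

fun leaves :: "'a cotree \<Rightarrow> 'a set" where
  "leaves (Leaf x) = {x}"
| "leaves (Inner b ts) = (\<Union>t\<in>set ts. leaves t)"

fun subtrees :: "'a cotree \<Rightarrow> 'a cotree set" where
  "subtrees (Leaf x) = {Leaf x}"
| "subtrees (Inner b ts) = insert (Inner b ts) (\<Union>t\<in>set ts. subtrees t)"

fun is_inner :: "'a cotree \<Rightarrow> bool" where
  "is_inner (Leaf x) = False"
| "is_inner (Inner b ts) = True"

fun label :: "'a cotree \<Rightarrow> bool" where
  "label (Leaf x) = False"
| "label (Inner b ts) = b"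

fun children :: "'a cotree \<Rightarrow> 'a cotree list" where
  "children (Leaf x) = []"
| "children (Inner b ts) = ts"

definition wf_tree :: "'a cotree \<Rightarrow> bool" where
  "wf_tree T \<longleftrightarrow> (\<forall>u\<in>subtrees T. is_inner u \<longrightarrow>
      length (children u) \<ge> 2 \<and>
      (\<forall>i<length (children u). \<forall>j<length (children u). i \<noteq> j \<longrightarrow>
          leaves (children u ! i) \<inter> leaves (children u ! j) = {}))"

definition is_cotree :: "('a \<Rightarrow> 'a \<Rightarrow> bool) \<Rightarrow> 'a set \<Rightarrow> 'a cotree \<Rightarrow> bool" where
  "is_cotree E V T \<longleftrightarrow> wf_tree T \<and> leaves T = V \<and>
     (\<forall>u\<in>subtrees T. is_inner u \<longrightarrow>
        (\<forall>i<length (children u). \<forall>j<length (children u). i \<noteq> j \<longrightarrow>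
           (\<forall>x\<in>leaves (children u ! i). \<forall>y\<in>leaves (children u ! j). E x y = label u)))"

definition discriminating :: "'a cotree \<Rightarrow> bool" where
  "discriminating T \<longleftrightarrow> (\<forall>u\<in>subtrees T. \<forall>v\<in>set (children u).
      is_inner u \<and> is_inner v \<longrightarrow> label u \<noteq> label v)"

definition is_discriminating_cotree :: "('a \<Rightarrow> 'a \<Rightarrow> bool) \<Rightarrow> 'a set \<Rightarrow> 'a cotree \<Rightarrow> bool" where
  "is_discriminating_cotree E V T \<longleftrightarrow> is_cotree E V T \<and> discriminating T"

definition bottom_up_order :: "'a cotree \<Rightarrow> 'a cotree list \<Rightarrow> bool" where
  "bottom_up_order T vs \<longleftrightarrow> distinct vs \<and> set vs = {u \<in> subtrees T. is_inner u} \<and>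
     (\<forall>i<length vs. \<forall>j<length vs. vs ! i \<in> subtrees (vs ! j) \<and> vs ! i \<noteq> vs ! j \<longrightarrow> i < j)"

definition proc_step :: "('a \<Rightarrow> 'a \<Rightarrow> bool) \<Rightarrow> ('a \<Rightarrow> 'c) \<Rightarrow> 'a cotree \<Rightarrow> ('a \<Rightarrow> 'c) \<Rightarrow> bool" where
  "proc_step E \<sigma> v \<sigma>' \<longleftrightarrow>
     (if label v then \<sigma>' = \<sigma>
      else (let W = leaves v; \<G> = components E W in
        \<exists>Gs\<in>\<G>. (\<forall>C\<in>\<G>. chi E C \<le> chi E Gs) \<and>
          (\<exists>\<phi> :: 'a set \<Rightarrow> 'c \<Rightarrow> 'c.
             (\<forall>C\<in>\<G>. C \<noteq> Gs \<longrightarrow> inj_on (\<phi> C) (\<sigma> ` C) \<and> \<phi> C ` (\<sigma> ` C) \<subseteq> \<sigma> ` Gs) \<and>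
             \<sigma>' = (\<lambda>x. if x \<in> W - Gs then \<phi> (component E W x) (\<sigma> x) else \<sigma> x))))"

inductive proc_run :: "('a \<Rightarrow> 'a \<Rightarrow> bool) \<Rightarrow> ('a \<Rightarrow> 'c) \<Rightarrow> 'a cotree list \<Rightarrow> ('a \<Rightarrow> 'c) \<Rightarrow> bool"
  for E where
  Nil: "proc_run E \<sigma> [] \<sigma>"
| Cons: "\<lbrakk>proc_step E \<sigma> v \<sigma>'; proc_run E \<sigma>' vs \<sigma>''\<rbrakk> \<Longrightarrow> proc_run E \<sigma> (v # vs) \<sigma>''"

definition procedure_output :: "('a \<Rightarrow> 'a \<Rightarrow> bool) \<Rightarrow> 'a set \<Rightarrow> 'a cotree \<Rightarrow> ('a \<Rightarrow> 'c) \<Rightarrow> bool" where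
  "procedure_output E V T \<sigma> \<longleftrightarrow> (\<exists>\<sigma>0 vs. inj_on \<sigma>0 V \<and> bottom_up_order T vs \<and> proc_run E \<sigma>0 vs \<sigma>)"

end

theory Submission
  imports Defs
begin

lemma subtrees_refl: "T \<in> subtrees T"
  by (cases T) auto

lemma subtrees_trans: "u \<in> subtrees T \<Longrightarrow> subtrees u \<subseteq> subtrees T"
  by (induction T) auto

lemma subtrees_transI: "u \<in> subtrees T \<Longrightarrow> w \<in> subtrees u \<Longrightarrow> w \<in> subtrees T"
  using subtrees_trans by blast

lemma child_subtree: "c \<in> set (children u) \<Longrightarrow> c \<in> subtrees u"
  by (cases u) (auto intro: subtrees_refl)

lemma leaves_mono: "u \<in> subtrees T \<Longrightarrow> leaves u \<subseteq> leaves T"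
  by (induction T) auto

lemma finite_leaves: "finite (leaves T)"
  by (induction T) auto

lemma wf_sub: "wf_tree T \<Longrightarrow> u \<in> subtrees T \<Longrightarrow> wf_tree u"
  unfolding wf_tree_def using subtrees_trans by blast

lemma size_sub: "w \<in> subtrees u \<Longrightarrow> size w \<le> size u"
proof (induction u)
  case (Leaf x) then show ?case by simp
next
  case (Inner b ts)
  show ?case
  proof (cases "w = Inner b ts")
    case False
    then obtain t where t: "t \<in> set ts" "w \<in> subtrees t" using Inner.prems by auto
    have "size w \<le> size t" using Inner.IH t by blast
    also have "size t \<le> size_list size ts" using t(1) by (simp add: size_list_estimation')
    finally show ?thesis by simp
  qed simp
qed

lemma size_sub_strict: assumes a: "w \<in> subtrees u" "w \<noteq> u" shows "size w < size u"
proof (cases u)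
  case (Leaf x) then show ?thesis using a by simp
next
  case (Inner b ts)
  obtain t where t: "t \<in> set ts" "w \<in> subtrees t" using Inner a by auto
  have "size w \<le> size t" using size_sub t by blast
  also have "size t \<le> size_list size ts" using t(1) by (simp add: size_list_estimation')
  finally show ?thesis using Inner by simp
qed

lemma sub_antisym: "w \<in> subtrees u \<Longrightarrow> u \<in> subtrees w \<Longrightarrow> w = u"
  using size_sub size_sub_strict by fastforce

lemma proper_sub_child: "w \<in> subtrees u \<Longrightarrow> w \<noteq> u \<Longrightarrow> \<exists>c\<in>set (children u). w \<in> subtrees c"
  by (cases u) auto

lemma wf_inner:
  assumes "wf_tree T" "is_inner T"
  shows "length (children T) \<ge> 2"
    "\<And>c1 c2. c1 \<in> set (children T) \<Longrightarrow> c2 \<in> set (children T) \<Longrightarrow> c1 \<noteq> c2 \<Longrightarrow> leaves c1 \<inter> leaves c2 = {}"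
proof -
  have h: "length (children T) \<ge> 2 \<and>
      (\<forall>i<length (children T). \<forall>j<length (children T). i \<noteq> j \<longrightarrow>
          leaves (children T ! i) \<inter> leaves (children T ! j) = {})"
    using assms unfolding wf_tree_def using subtrees_refl by blast
  then show "length (children T) \<ge> 2" by blast
  fix c1 c2 assume "c1 \<in> set (children T)" "c2 \<in> set (children T)" "c1 \<noteq> c2"
  then obtain i j where "i < length (children T)" "j < length (children T)" "c1 = children T ! i" "c2 = children T ! j"
    by (metis in_set_conv_nth)
  then show "leaves c1 \<inter> leaves c2 = {}" using h \<open>c1 \<noteq> c2\<close> by blast
qed

lemma leaves_ne: "wf_tree u \<Longrightarrow> leaves u \<noteq> {}"
proof (induction u)
  case (Leaf x) then show ?case by simp
next
  case (Inner b ts)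
  have "length ts \<ge> 2" using wf_inner(1)[OF Inner.prems] by simp
  then obtain t where t: "t \<in> set ts" by (cases ts) auto
  have "wf_tree t" using wf_sub[OF Inner.prems] t by (auto intro: subtrees_refl)
  then show ?case using Inner.IH t by fastforce
qed

lemma wf_distinct_children:
  assumes "wf_tree T" "is_inner T"
  shows "distinct (children T)"
proof -
  have h: "\<forall>i<length (children T). \<forall>j<length (children T). i \<noteq> j \<longrightarrow>
          leaves (children T ! i) \<inter> leaves (children T ! j) = {}"
    using assms unfolding wf_tree_def using subtrees_refl by blast
  show ?thesis unfolding distinct_conv_nth
  proof (intro allI impI)
    fix i j assume ij: "i < length (children T)" "j < length (children T)" "i \<noteq> j"
    have "wf_tree (children T ! i)" using wf_sub[OF assms(1)] child_subtree ij by (metis nth_mem)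
    then have "leaves (children T ! i) \<noteq> {}" by (rule leaves_ne)
    moreover have "leaves (children T ! i) \<inter> leaves (children T ! j) = {}" using h ij by blast
    ultimately show "children T ! i \<noteq> children T ! j" by auto
  qed
qed

lemma two_children:
  assumes "wf_tree T" "is_inner T" "c \<in> set (children T)"
  shows "\<exists>c'\<in>set (children T). c' \<noteq> c"
proof (rule ccontr)
  assume "\<not> ?thesis"
  then have "set (children T) = {c}" using assms(3) by blast
  then have "card (set (children T)) = 1" by simp
  moreover have "card (set (children T)) = length (children T)"
    using wf_distinct_children[OF assms(1,2)] by (simp add: distinct_card)
  ultimately show False using wf_inner(1)[OF assms(1,2)] by simp
qed

lemma laminar:
  "wf_tree T \<Longrightarrow> u \<in> subtrees T \<Longrightarrow> w \<in> subtrees T \<Longrightarrow>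
     u \<in> subtrees w \<or> w \<in> subtrees u \<or> leaves u \<inter> leaves w = {}"
proof (induction T arbitrary: u w)
  case (Leaf x) then show ?case by simp
next
  case (Inner b ts)
  show ?case
  proof (cases "u = Inner b ts \<or> w = Inner b ts")
    case True
    then show ?thesis
    proof
      assume "u = Inner b ts" then show ?thesis using Inner.prems(3) by simp
    next
      assume "w = Inner b ts" then show ?thesis using Inner.prems(2) by simp
    qed
  next
    case False
    then obtain t1 t2 where t: "t1 \<in> set ts" "u \<in> subtrees t1" "t2 \<in> set ts" "w \<in> subtrees t2"
      using Inner.prems by auto
    show ?thesis
    proof (cases "t1 = t2")
      case True
      have "wf_tree t1" using wf_sub[OF Inner.prems(1)] t by (auto intro: subtrees_refl)
      then show ?thesis using Inner.IH t True by blast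
    next
      case False
      have "leaves t1 \<inter> leaves t2 = {}" using wf_inner(2)[OF Inner.prems(1)] t False by simp
      then show ?thesis using leaves_mono t by blast
    qed
  qed
qed

lemma leaf_cases: "\<not> is_inner u \<Longrightarrow> \<exists>x. u = Leaf x"
  by (cases u) auto

lemma single_leaf: assumes a: "wf_tree u" "leaves u \<subseteq> {x}" shows "u = Leaf x"
proof (cases u)
  case (Leaf y) then show ?thesis using a by simp
next
  case (Inner b ts)
  obtain c where c: "c \<in> set (children u)" using wf_inner(1)[OF a(1)] Inner
    by (cases ts) auto
  obtain c' where c': "c' \<in> set (children u)" "c' \<noteq> c" using two_children[OF a(1) _ c] Inner by auto
  have d: "leaves c \<inter> leaves c' = {}" using wf_inner(2)[OF a(1)] Inner c c' by simp
  have "leaves c \<noteq> {}" "leaves c' \<noteq> {}"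
    using leaves_ne wf_sub[OF a(1)] child_subtree c c' by blast+
  moreover have "leaves c \<subseteq> {x}" "leaves c' \<subseteq> {x}" using a(2) Inner c c' by auto
  ultimately show ?thesis using d by blast
qed

lemma proper_sub_parent: "w \<in> subtrees c \<Longrightarrow> w \<noteq> c \<Longrightarrow> \<exists>p\<in>subtrees c. w \<in> set (children p)"
proof (induction c)
  case (Leaf x) then show ?case by simp
next
  case (Inner b ts)
  then obtain t where t: "t \<in> set ts" "w \<in> subtrees t" by auto
  show ?case
  proof (cases "w = t")
    case True then show ?thesis using t by (auto intro!: bexI[of _ "Inner b ts"])
  next
    case False then show ?thesis using Inner.IH t by auto
  qed
qed

definition good :: "('a \<Rightarrow> 'a \<Rightarrow> bool) \<Rightarrow> ('a \<Rightarrow> 'c) \<Rightarrow> 'a set \<Rightarrow> bool" where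
  "good E \<sigma> A \<longleftrightarrow> proper_coloring E A \<sigma> \<and> card (\<sigma> ` A) = chi E A"

definition recol :: "('a \<Rightarrow> 'c) \<Rightarrow> ('a \<Rightarrow> 'd) \<Rightarrow> 'a set \<Rightarrow> bool" where
  "recol \<sigma> \<sigma>' A \<longleftrightarrow> (\<exists>f. inj_on f (\<sigma> ` A) \<and> (\<forall>x\<in>A. \<sigma>' x = f (\<sigma> x)))"

lemma chi_le_card:
  assumes "finite W" "proper_coloring E W (\<sigma> :: 'a \<Rightarrow> 'c)"
  shows "chi E W \<le> card (\<sigma> ` W)"
proof -
  obtain g where g: "bij_betw g (\<sigma> ` W) {0..<card (\<sigma> ` W)}"
    using ex_bij_betw_finite_nat assms(1) by blast
  have inj: "inj_on g (\<sigma> ` W)" using g bij_betw_def by blast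
  have "proper_coloring E W (g \<circ> \<sigma>)"
    using assms(2) inj unfolding proper_coloring_def inj_on_def by auto
  moreover have "card ((g \<circ> \<sigma>) ` W) = card (\<sigma> ` W)"
  proof -
    have "(g \<circ> \<sigma>) ` W = g ` (\<sigma> ` W)" by (simp add: image_comp)
    then show ?thesis using card_image[OF inj] by simp
  qed
  ultimately show ?thesis unfolding chi_def by (metis (mono_tags, lifting) Least_le)
qed

lemma chi_attained:
  assumes "finite W" "\<forall>x. \<not> E x x"
  shows "\<exists>\<nu> :: 'a \<Rightarrow> nat. proper_coloring E W \<nu> \<and> card (\<nu> ` W) = chi E W"
proof -
  obtain f :: "'a \<Rightarrow> nat" where f: "inj_on f W"
    using finite_imp_inj_to_nat_seg[OF assms(1)] by blast
  have "proper_coloring E W f" using f assms(2) unfolding proper_coloring_def inj_on_def by metis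
  then have ex: "\<exists>k. \<exists>\<sigma> :: 'a \<Rightarrow> nat. proper_coloring E W \<sigma> \<and> card (\<sigma> ` W) = k" by blast
  show ?thesis unfolding chi_def by (rule LeastI_ex[OF ex])
qed

lemma chi_range:
  assumes "finite W" "\<forall>x. \<not> E x x"
  shows "\<exists>\<nu> :: 'a \<Rightarrow> nat. proper_coloring E W \<nu> \<and> \<nu> ` W \<subseteq> {0..<chi E W}"
proof -
  obtain \<nu> :: "'a \<Rightarrow> nat" where nu: "proper_coloring E W \<nu>" "card (\<nu> ` W) = chi E W"
    using chi_attained[of W E, OF assms] by blast
  obtain g where g: "bij_betw g (\<nu> ` W) {0..<card (\<nu> ` W)}"
    using ex_bij_betw_finite_nat assms(1) by blast
  have inj: "inj_on g (\<nu> ` W)" using g bij_betw_def by blast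
  have "proper_coloring E W (g \<circ> \<nu>)"
    using nu(1) inj unfolding proper_coloring_def inj_on_def by auto
  moreover have "(g \<circ> \<nu>) ` W \<subseteq> {0..<chi E W}"
    using g nu(2) unfolding bij_betw_def by (metis image_comp order_refl)
  ultimately show ?thesis by blast
qed

lemma chi_mono:
  assumes "finite B" "A \<subseteq> B" "\<forall>x. \<not> E x x"
  shows "chi E A \<le> chi E B"
proof -
  obtain \<nu> :: "'a \<Rightarrow> nat" where nu: "proper_coloring E B \<nu>" "card (\<nu> ` B) = chi E B"
    using chi_attained[of B E, OF assms(1,3)] by blast
  have "proper_coloring E A \<nu>" using nu(1) assms(2) unfolding proper_coloring_def by blast
  then have "chi E A \<le> card (\<nu> ` A)" using chi_le_card assms finite_subset by blast
  also have "\<dots> \<le> card (\<nu> ` B)" using assms by (intro card_mono) auto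
  finally show ?thesis using nu(2) by simp
qed

lemma chi_single: "\<not> E x x \<Longrightarrow> chi E {x} = 1"
proof -
  assume "\<not> E x x"
  then have "proper_coloring E {x} (\<lambda>_. 0::nat)" unfolding proper_coloring_def by simp
  then have "chi E {x} \<le> 1" using chi_le_card[of "{x}" E "\<lambda>_. 0::nat"] by simp
  moreover have "chi E {x} \<noteq> 0"
  proof -
    have "\<exists>k. \<exists>\<sigma> :: 'a \<Rightarrow> nat. proper_coloring E {x} \<sigma> \<and> card (\<sigma> ` {x}) = k"
      using \<open>proper_coloring E {x} (\<lambda>_. 0::nat)\<close> by blast
    then have "\<exists>\<sigma> :: 'a \<Rightarrow> nat. proper_coloring E {x} \<sigma> \<and> card (\<sigma> ` {x}) = chi E {x}"
      unfolding chi_def by (rule LeastI_ex)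
    then show ?thesis by auto
  qed
  ultimately show ?thesis by simp
qed

lemma good_recol: "good E \<sigma> A \<Longrightarrow> recol \<sigma> \<sigma>' A \<Longrightarrow> good E \<sigma>' A"
proof -
  assume g: "good E \<sigma> A" and r: "recol \<sigma> \<sigma>' A"
  then obtain f where f: "inj_on f (\<sigma> ` A)" "\<forall>x\<in>A. \<sigma>' x = f (\<sigma> x)" unfolding recol_def by blast
  have im: "\<sigma>' ` A = f ` (\<sigma> ` A)" using f(2) by force
  have "proper_coloring E A \<sigma>'"
    using g f unfolding good_def proper_coloring_def inj_on_def by (metis imageI)
  moreover have "card (\<sigma>' ` A) = card (\<sigma> ` A)" using im f(1) by (simp add: card_image)
  ultimately show ?thesis using g unfolding good_def by simp
qed

lemma recol_cong: "(\<forall>x\<in>A. \<sigma>' x = \<sigma> x) \<Longrightarrow> recol \<sigma> \<sigma>' A"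
  unfolding recol_def by (intro exI[of _ id]) auto

lemma recol_mono: "recol \<sigma> \<sigma>' A \<Longrightarrow> B \<subseteq> A \<Longrightarrow> recol \<sigma> \<sigma>' B"
  unfolding recol_def by (meson image_mono inj_on_subset subsetD)

lemma recol_trans: "recol \<sigma> \<sigma>' A \<Longrightarrow> recol \<sigma>' \<sigma>'' A \<Longrightarrow> recol \<sigma> \<sigma>'' A"
proof -
  assume "recol \<sigma> \<sigma>' A" "recol \<sigma>' \<sigma>'' A"
  then obtain f g where f: "inj_on f (\<sigma> ` A)" "\<forall>x\<in>A. \<sigma>' x = f (\<sigma> x)"
    and g: "inj_on g (\<sigma>' ` A)" "\<forall>x\<in>A. \<sigma>'' x = g (\<sigma>' x)" unfolding recol_def by blast
  have im: "\<sigma>' ` A = f ` (\<sigma> ` A)" using f(2) by force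
  have "inj_on (g \<circ> f) (\<sigma> ` A)" using f(1) g(1) im by (simp add: comp_inj_on)
  moreover have "\<forall>x\<in>A. \<sigma>'' x = (g \<circ> f) (\<sigma> x)" using f g by simp
  ultimately show ?thesis unfolding recol_def by blast
qed

locale ctx =
  fixes E :: "'a \<Rightarrow> 'a \<Rightarrow> bool" and V :: "'a set" and T :: "'a cotree"
  assumes gr: "graph E V" and dc: "is_discriminating_cotree E V T"
begin

lemma wfT: "wf_tree T" using dc unfolding is_discriminating_cotree_def is_cotree_def by blast
lemma leavesT: "leaves T = V" using dc unfolding is_discriminating_cotree_def is_cotree_def by blast
lemma finV: "finite V" using gr unfolding graph_def by blast
lemma irr: "\<forall>x. \<not> E x x" using gr unfolding graph_def by blast

lemma sub_wf: "u \<in> subtrees T \<Longrightarrow> wf_tree u" using wf_sub wfT by blast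
lemma sub_leaves: "u \<in> subtrees T \<Longrightarrow> leaves u \<subseteq> V" using leaves_mono leavesT by blast
lemma child_T: "u \<in> subtrees T \<Longrightarrow> c \<in> set (children u) \<Longrightarrow> c \<in> subtrees T"
  using child_subtree subtrees_transI by blast
lemma sub_ne: "u \<in> subtrees T \<Longrightarrow> leaves u \<noteq> {}" using leaves_ne sub_wf by blast

lemma cross:
  assumes "u \<in> subtrees T" "is_inner u" "c1 \<in> set (children u)" "c2 \<in> set (children u)" "c1 \<noteq> c2"
    "x \<in> leaves c1" "y \<in> leaves c2"
  shows "E x y = label u"
proof -
  obtain i j where ij: "i < length (children u)" "j < length (children u)" "c1 = children u ! i" "c2 = children u ! j"
    using assms(3,4) by (metis in_set_conv_nth)
  have "i \<noteq> j" using ij assms(5) by blast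
  moreover have "\<forall>i<length (children u). \<forall>j<length (children u). i \<noteq> j \<longrightarrow>
           (\<forall>x\<in>leaves (children u ! i). \<forall>y\<in>leaves (children u ! j). E x y = label u)"
    using dc assms(1,2) unfolding is_discriminating_cotree_def is_cotree_def by blast
  ultimately show ?thesis using ij assms(6,7) by blast
qed

lemma disc: "u \<in> subtrees T \<Longrightarrow> c \<in> set (children u) \<Longrightarrow> is_inner u \<Longrightarrow> is_inner c \<Longrightarrow> label c \<noteq> label u"
  using dc unfolding is_discriminating_cotree_def discriminating_def by blast

lemma disj_children: "u \<in> subtrees T \<Longrightarrow> is_inner u \<Longrightarrow> c1 \<in> set (children u) \<Longrightarrow> c2 \<in> set (children u)
   \<Longrightarrow> c1 \<noteq> c2 \<Longrightarrow> leaves c1 \<inter> leaves c2 = {}"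
  using wf_inner(2) sub_wf by blast

lemma child_leaves_inj: "u \<in> subtrees T \<Longrightarrow> is_inner u \<Longrightarrow> c1 \<in> set (children u) \<Longrightarrow> c2 \<in> set (children u)
   \<Longrightarrow> leaves c1 = leaves c2 \<Longrightarrow> c1 = c2"
proof (rule ccontr)
  assume a: "u \<in> subtrees T" "is_inner u" "c1 \<in> set (children u)" "c2 \<in> set (children u)"
    "leaves c1 = leaves c2" "c1 \<noteq> c2"
  then have "leaves c1 \<inter> leaves c2 = {}" using disj_children by blast
  moreover have "leaves c1 \<noteq> {}" using sub_ne child_T a by blast
  ultimately show False using a(5) by simp
qed

lemma leaves_children: "is_inner u \<Longrightarrow> leaves u = (\<Union>c\<in>set (children u). leaves c)"
  by (cases u) auto

lemma in_child: "is_inner u \<Longrightarrow> x \<in> leaves u \<Longrightarrow> \<exists>c\<in>set (children u). x \<in> leaves c"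
  using leaves_children by blast

lemma join_conn:
  assumes "c \<in> subtrees T" "is_inner c" "label c" "leaves c \<subseteq> W" "x \<in> leaves c" "y \<in> leaves c"
  shows "(x, y) \<in> {(a, b). a \<in> W \<and> b \<in> W \<and> E a b}\<^sup>*"
proof -
  let ?R = "{(a, b). a \<in> W \<and> b \<in> W \<and> E a b}"
  obtain d1 where d1: "d1 \<in> set (children c)" "x \<in> leaves d1" using in_child[OF assms(2,5)] by blast
  obtain d2 where d2: "d2 \<in> set (children c)" "y \<in> leaves d2" using in_child[OF assms(2,6)] by blast
  show ?thesis
  proof (cases "d1 = d2")
    case False
    then have "E x y" using cross[OF assms(1,2) d1(1) d2(1) False d1(2) d2(2)] assms(3) by simp
    then have "(x, y) \<in> ?R" using assms(4-6) by blast
    then show ?thesis by (rule r_into_rtrancl)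
  next
    case True
    obtain d' where d': "d' \<in> set (children c)" "d' \<noteq> d1" using two_children[OF sub_wf[OF assms(1)] assms(2) d1(1)] by blast
    obtain z where z: "z \<in> leaves d'" using sub_ne[OF child_T[OF assms(1) d'(1)]] by blast
    have "E x z" using cross[OF assms(1,2) d1(1) d'(1) _ d1(2) z] d'(2) assms(3) by simp
    moreover have "E z y" using cross[OF assms(1,2) d'(1) d2(1) _ z d2(2)] d'(2) True assms(3) by simp
    moreover have "z \<in> leaves c" using z d'(1) leaves_children[OF assms(2)] by blast
    then have "z \<in> W" using assms(4) by blast
    ultimately have "(x, z) \<in> ?R" "(z, y) \<in> ?R" using assms(4-6) by blast+
    then show ?thesis by (meson converse_rtrancl_into_rtrancl r_into_rtrancl)
  qed
qed

lemma rtrancl_closed: "(x, y) \<in> R\<^sup>* \<Longrightarrow> x \<in> S \<Longrightarrow> (\<And>a b. (a, b) \<in> R \<Longrightarrow> a \<in> S \<Longrightarrow> b \<in> S) \<Longrightarrow> y \<in> S"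
  by (induction rule: rtrancl_induct) blast+

lemma comp_child:
  assumes u: "u \<in> subtrees T" "is_inner u" "\<not> label u" and c: "c \<in> set (children u)" and x: "x \<in> leaves c"
  shows "component E (leaves u) x = leaves c"
proof -
  let ?W = "leaves u"
  let ?R = "{(a, b). a \<in> ?W \<and> b \<in> ?W \<and> E a b}"
  have cW: "leaves c \<subseteq> ?W" using c leaves_children[OF u(2)] by blast
  have cl: "b \<in> leaves c" if "(a, b) \<in> ?R" "a \<in> leaves c" for a b
  proof -
    have ab: "b \<in> ?W" "E a b" using that(1) by blast+
    obtain c' where c': "c' \<in> set (children u)" "b \<in> leaves c'" using in_child[OF u(2) ab(1)] by blast
    show ?thesis
    proof (rule ccontr)
      assume "b \<notin> leaves c"
      then have "c \<noteq> c'" using c' by blast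
      have "E a b = label u" using cross[OF u(1,2) c c'(1) \<open>c \<noteq> c'\<close> that(2) c'(2)] .
      then show False using ab(2) u(3) by simp
    qed
  qed
  have A: "y \<in> leaves c" if "(x, y) \<in> ?R\<^sup>*" for y
    using rtrancl_closed[OF that x] cl by blast
  have B: "(x, y) \<in> ?R\<^sup>*" if "y \<in> leaves c" for y
  proof (cases "is_inner c")
    case True
    have "label c" using disc[OF u(1) c u(2) True] u(3) by simp
    then show ?thesis using join_conn[OF child_T[OF u(1) c] True _ cW x that] by blast
  next
    case False
    then obtain z where "c = Leaf z" using leaf_cases by blast
    then have "y = x" using x that by simp
    then show ?thesis by simp
  qed
  show ?thesis unfolding component_def
  proof (intro equalityI subsetI)
    fix y assume "y \<in> {y \<in> ?W. (x, y) \<in> ?R\<^sup>*}"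
    then show "y \<in> leaves c" using A by blast
  next
    fix y assume "y \<in> leaves c"
    then show "y \<in> {y \<in> ?W. (x, y) \<in> ?R\<^sup>*}" using B cW by blast
  qed
qed

lemma components_children:
  assumes u: "u \<in> subtrees T" "is_inner u" "\<not> label u"
  shows "components E (leaves u) = leaves ` set (children u)"
proof
  show "components E (leaves u) \<subseteq> leaves ` set (children u)"
  proof
    fix C assume "C \<in> components E (leaves u)"
    then obtain x where x: "x \<in> leaves u" "C = component E (leaves u) x" unfolding components_def by blast
    obtain c where c: "c \<in> set (children u)" "x \<in> leaves c" using in_child[OF u(2) x(1)] by blast
    show "C \<in> leaves ` set (children u)" using comp_child[OF u c] x(2) c(1) by blast
  qed
next
  show "leaves ` set (children u) \<subseteq> components E (leaves u)"
  proof
    fix C assume "C \<in> leaves ` set (children u)"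
    then obtain c where c: "c \<in> set (children u)" "C = leaves c" by blast
    obtain x where x: "x \<in> leaves c" using sub_ne[OF child_T[OF u(1) c(1)]] by blast
    have "x \<in> leaves u" using x c leaves_children[OF u(2)] by blast
    then show "C \<in> components E (leaves u)"
      unfolding components_def using comp_child[OF u c(1) x] c(2) by blast
  qed
qed

end

context ctx begin

lemma step_label: "label v \<Longrightarrow> proc_step E \<sigma> v \<sigma>' \<Longrightarrow> \<sigma>' = \<sigma>"
  unfolding proc_step_def by simp

lemma step_label_intro: "label v \<Longrightarrow> proc_step E \<sigma> v \<sigma>"
  unfolding proc_step_def by simp

lemma step0_fwd:
  assumes v: "v \<in> subtrees T" "is_inner v" "\<not> label v" and st: "proc_step E \<sigma> v \<sigma>'"
  shows "\<exists>cs\<in>set (children v). (\<forall>c\<in>set (children v). chi E (leaves c) \<le> chi E (leaves cs)) \<and>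
     (\<forall>x. x \<notin> leaves v \<longrightarrow> \<sigma>' x = \<sigma> x) \<and> (\<forall>x\<in>leaves cs. \<sigma>' x = \<sigma> x) \<and>
     (\<forall>c\<in>set (children v). c \<noteq> cs \<longrightarrow> (\<exists>f. inj_on f (\<sigma> ` leaves c) \<and> f ` \<sigma> ` leaves c \<subseteq> \<sigma> ` leaves cs
        \<and> (\<forall>x\<in>leaves c. \<sigma>' x = f (\<sigma> x))))"
proof -
  let ?W = "leaves v"
  let ?G = "components E ?W"
  have G: "?G = leaves ` set (children v)" using components_children[OF v] .
  have "\<exists>Gs\<in>?G. (\<forall>C\<in>?G. chi E C \<le> chi E Gs) \<and>
          (\<exists>\<phi> :: 'a set \<Rightarrow> 'b \<Rightarrow> 'b.
             (\<forall>C\<in>?G. C \<noteq> Gs \<longrightarrow> inj_on (\<phi> C) (\<sigma> ` C) \<and> \<phi> C ` (\<sigma> ` C) \<subseteq> \<sigma> ` Gs) \<and>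
             \<sigma>' = (\<lambda>x. if x \<in> ?W - Gs then \<phi> (component E ?W x) (\<sigma> x) else \<sigma> x))"
    using st v(3) unfolding proc_step_def Let_def by simp
  then obtain Gs \<phi> where Gs: "Gs \<in> ?G" "\<forall>C\<in>?G. chi E C \<le> chi E Gs"
    and ph: "\<forall>C\<in>?G. C \<noteq> Gs \<longrightarrow> inj_on (\<phi> C) (\<sigma> ` C) \<and> \<phi> C ` (\<sigma> ` C) \<subseteq> \<sigma> ` Gs"
    and s': "\<sigma>' = (\<lambda>x. if x \<in> ?W - Gs then \<phi> (component E ?W x) (\<sigma> x) else \<sigma> x)"
    by blast
  have "Gs \<in> leaves ` set (children v)" using Gs(1) by (simp only: G)
  then obtain cs where cs: "cs \<in> set (children v)" "Gs = leaves cs" by (rule imageE) simp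
  have lc: "leaves c \<subseteq> ?W" if "c \<in> set (children v)" for c using leaves_children[OF v(2)] that by blast
  have h1: "\<forall>c\<in>set (children v). chi E (leaves c) \<le> chi E (leaves cs)"
  proof
    fix c assume "c \<in> set (children v)"
    then have "leaves c \<in> leaves ` set (children v)" by (rule imageI)
    then have "leaves c \<in> ?G" by (simp only: G)
    then have "chi E (leaves c) \<le> chi E Gs" using Gs(2) by blast
    then show "chi E (leaves c) \<le> chi E (leaves cs)" using cs(2) by simp
  qed
  have h2: "\<forall>x. x \<notin> ?W \<longrightarrow> \<sigma>' x = \<sigma> x" using s' by simp
  have h3: "\<forall>x\<in>leaves cs. \<sigma>' x = \<sigma> x" using s' cs(2) by simp
  have h4: "\<forall>c\<in>set (children v). c \<noteq> cs \<longrightarrow> (\<exists>f. inj_on f (\<sigma> ` leaves c) \<and> f ` \<sigma> ` leaves c \<subseteq> \<sigma> ` leaves cs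
        \<and> (\<forall>x\<in>leaves c. \<sigma>' x = f (\<sigma> x)))"
  proof (intro ballI impI)
    fix c assume c: "c \<in> set (children v)" "c \<noteq> cs"
    have ne: "leaves c \<noteq> Gs"
    proof
      assume "leaves c = Gs"
      then have "leaves c = leaves cs" using cs(2) by simp
      then have "c = cs" using child_leaves_inj[OF v(1,2) c(1) cs(1)] by blast
      then show False using c(2) by contradiction
    qed
    have "leaves c \<in> leaves ` set (children v)" using c(1) by (rule imageI)
    then have inG: "leaves c \<in> ?G" by (simp only: G)
    have dj: "leaves c \<inter> leaves cs = {}" using disj_children[OF v(1,2) c(1) cs(1) c(2)] .
    have eq: "\<forall>x\<in>leaves c. \<sigma>' x = \<phi> (leaves c) (\<sigma> x)"
    proof
      fix x assume x: "x \<in> leaves c"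
      have "x \<in> ?W" using x lc[OF c(1)] by (rule subsetD[rotated])
      moreover have "x \<notin> Gs" using x dj unfolding cs(2) by blast
      ultimately have "x \<in> ?W - Gs" by (rule DiffI)
      moreover have "component E ?W x = leaves c" using comp_child[OF v c(1) x] .
      ultimately show "\<sigma>' x = \<phi> (leaves c) (\<sigma> x)" unfolding s' by (simp only: if_True)
    qed
    have "inj_on (\<phi> (leaves c)) (\<sigma> ` leaves c) \<and> \<phi> (leaves c) ` \<sigma> ` leaves c \<subseteq> \<sigma> ` Gs"
      using ph[rule_format, OF inG ne] .
    then have "inj_on (\<phi> (leaves c)) (\<sigma> ` leaves c) \<and> \<phi> (leaves c) ` \<sigma> ` leaves c \<subseteq> \<sigma> ` leaves cs
        \<and> (\<forall>x\<in>leaves c. \<sigma>' x = \<phi> (leaves c) (\<sigma> x))" using eq cs(2) by simp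
    then show "\<exists>f. inj_on f (\<sigma> ` leaves c) \<and> f ` \<sigma> ` leaves c \<subseteq> \<sigma> ` leaves cs
        \<and> (\<forall>x\<in>leaves c. \<sigma>' x = f (\<sigma> x))" by (rule exI[of _ "\<phi> (leaves c)"])
  qed
  have "(\<forall>c\<in>set (children v). chi E (leaves c) \<le> chi E (leaves cs)) \<and>
     (\<forall>x. x \<notin> leaves v \<longrightarrow> \<sigma>' x = \<sigma> x) \<and> (\<forall>x\<in>leaves cs. \<sigma>' x = \<sigma> x) \<and>
     (\<forall>c\<in>set (children v). c \<noteq> cs \<longrightarrow> (\<exists>f. inj_on f (\<sigma> ` leaves c) \<and> f ` \<sigma> ` leaves c \<subseteq> \<sigma> ` leaves cs
        \<and> (\<forall>x\<in>leaves c. \<sigma>' x = f (\<sigma> x))))" using h1 h2 h3 h4 by (intro conjI)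
  then show ?thesis using cs(1) by (rule bexI)
qed

lemma step0_bwd:
  assumes v: "v \<in> subtrees T" "is_inner v" "\<not> label v" and cs: "cs \<in> set (children v)"
    and mx: "\<forall>c\<in>set (children v). chi E (leaves c) \<le> chi E (leaves cs)"
    and F: "\<forall>c\<in>set (children v). c \<noteq> cs \<longrightarrow> inj_on (F c) (\<sigma> ` leaves c) \<and> F c ` \<sigma> ` leaves c \<subseteq> \<sigma> ` leaves cs"
  shows "\<exists>\<sigma>'. proc_step E \<sigma> v \<sigma>' \<and> (\<forall>x. x \<notin> leaves v \<longrightarrow> \<sigma>' x = \<sigma> x) \<and> (\<forall>x\<in>leaves cs. \<sigma>' x = \<sigma> x) \<and>
     (\<forall>c\<in>set (children v). c \<noteq> cs \<longrightarrow> (\<forall>x\<in>leaves c. \<sigma>' x = F c (\<sigma> x)))"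
proof -
  let ?W = "leaves v"
  let ?G = "components E ?W"
  have G: "?G = leaves ` set (children v)" using components_children[OF v] .
  define ch where "ch C = (SOME c. c \<in> set (children v) \<and> leaves c = C)" for C
  have ch: "ch (leaves c) = c" if "c \<in> set (children v)" for c
  proof -
    have "ch (leaves c) \<in> set (children v) \<and> leaves (ch (leaves c)) = leaves c"
      unfolding ch_def by (rule someI[of _ c]) (use that in blast)
    then show ?thesis using child_leaves_inj[OF v(1,2) _ that] by blast
  qed
  define \<phi> where "\<phi> C = F (ch C)" for C
  define \<sigma>' where "\<sigma>' = (\<lambda>x. if x \<in> ?W - leaves cs then \<phi> (component E ?W x) (\<sigma> x) else \<sigma> x)"
  have lc: "leaves c \<subseteq> ?W" if "c \<in> set (children v)" for c using leaves_children[OF v(2)] that by blast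
  have step: "proc_step E \<sigma> v \<sigma>'"
  proof -
    have "\<forall>C\<in>?G. C \<noteq> leaves cs \<longrightarrow> inj_on (\<phi> C) (\<sigma> ` C) \<and> \<phi> C ` (\<sigma> ` C) \<subseteq> \<sigma> ` leaves cs"
    proof (intro ballI impI)
      fix C assume C: "C \<in> ?G" "C \<noteq> leaves cs"
      then have "C \<in> leaves ` set (children v)" by (simp only: G)
      then obtain c where c: "c \<in> set (children v)" "C = leaves c" by (rule imageE) simp
      have "c \<noteq> cs" using C(2) c(2) by blast
      then show "inj_on (\<phi> C) (\<sigma> ` C) \<and> \<phi> C ` (\<sigma> ` C) \<subseteq> \<sigma> ` leaves cs"
        using F c ch[OF c(1)] unfolding \<phi>_def by simp
    qed
    moreover have "\<forall>C\<in>?G. chi E C \<le> chi E (leaves cs)" using mx by (simp add: G)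
    moreover have "leaves cs \<in> ?G" using cs by (simp add: G)
    ultimately have "\<exists>Gs\<in>?G. (\<forall>C\<in>?G. chi E C \<le> chi E Gs) \<and>
          (\<exists>\<phi> :: 'a set \<Rightarrow> 'b \<Rightarrow> 'b.
             (\<forall>C\<in>?G. C \<noteq> Gs \<longrightarrow> inj_on (\<phi> C) (\<sigma> ` C) \<and> \<phi> C ` (\<sigma> ` C) \<subseteq> \<sigma> ` Gs) \<and>
             \<sigma>' = (\<lambda>x. if x \<in> ?W - Gs then \<phi> (component E ?W x) (\<sigma> x) else \<sigma> x))"
      unfolding \<sigma>'_def by (intro bexI[of _ "leaves cs"] conjI exI[of _ \<phi>]) (assumption | rule refl)+
    then show ?thesis unfolding proc_step_def Let_def using v(3) by simp
  qed
  show ?thesis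
  proof (intro exI conjI allI impI ballI)
    show "proc_step E \<sigma> v \<sigma>'" by (rule step)
  next
    fix x assume "x \<notin> ?W" then show "\<sigma>' x = \<sigma> x" unfolding \<sigma>'_def by simp
  next
    fix x assume "x \<in> leaves cs" then show "\<sigma>' x = \<sigma> x" unfolding \<sigma>'_def by simp
  next
    fix c x assume c: "c \<in> set (children v)" "c \<noteq> cs" and x: "x \<in> leaves c"
    have dj: "leaves c \<inter> leaves cs = {}" using disj_children[OF v(1,2) c(1) cs c(2)] .
    have "x \<in> ?W - leaves cs" using x lc[OF c(1)] dj by blast
    moreover have "component E ?W x = leaves c" using comp_child[OF v c(1) x] .
    ultimately show "\<sigma>' x = F c (\<sigma> x)" unfolding \<sigma>'_def \<phi>_def using ch[OF c(1)] by simp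
  qed
qed

lemma step_facts:
  assumes v: "v \<in> subtrees T" "is_inner v" and st: "proc_step E \<sigma> v \<sigma>'"
  shows "\<forall>x. x \<notin> leaves v \<longrightarrow> \<sigma>' x = \<sigma> x" "\<sigma>' ` leaves v \<subseteq> \<sigma> ` leaves v"
    "\<forall>c\<in>set (children v). recol \<sigma> \<sigma>' (leaves c)"
proof -
  have "(\<forall>x. x \<notin> leaves v \<longrightarrow> \<sigma>' x = \<sigma> x) \<and> \<sigma>' ` leaves v \<subseteq> \<sigma> ` leaves v \<and>
    (\<forall>c\<in>set (children v). recol \<sigma> \<sigma>' (leaves c))"
  proof (cases "label v")
    case True
    then have "\<sigma>' = \<sigma>" using step_label st by blast
    then show ?thesis using recol_cong[of _ \<sigma>' \<sigma>] by simp
  next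
    case False
    obtain cs where cs: "cs \<in> set (children v)"
      and out: "\<forall>x. x \<notin> leaves v \<longrightarrow> \<sigma>' x = \<sigma> x" and ins: "\<forall>x\<in>leaves cs. \<sigma>' x = \<sigma> x"
      and oth: "\<forall>c\<in>set (children v). c \<noteq> cs \<longrightarrow> (\<exists>f. inj_on f (\<sigma> ` leaves c) \<and> f ` \<sigma> ` leaves c \<subseteq> \<sigma> ` leaves cs
        \<and> (\<forall>x\<in>leaves c. \<sigma>' x = f (\<sigma> x)))"
      using step0_fwd[OF v False st] by blast
    have csv: "leaves cs \<subseteq> leaves v" using cs leaves_children[OF v(2)] by blast
    have "\<sigma>' x \<in> \<sigma> ` leaves v" if x: "x \<in> leaves v" for x
    proof -
      obtain c where c: "c \<in> set (children v)" "x \<in> leaves c" using in_child[OF v(2) x] by blast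
      show ?thesis
      proof (cases "c = cs")
        case True then show ?thesis using ins c x by simp
      next
        case False
        then obtain f where "f ` \<sigma> ` leaves c \<subseteq> \<sigma> ` leaves cs" "\<forall>x\<in>leaves c. \<sigma>' x = f (\<sigma> x)"
          using oth c(1) by blast
        then show ?thesis using c(2) csv by blast
      qed
    qed
    moreover have "recol \<sigma> \<sigma>' (leaves c)" if c: "c \<in> set (children v)" for c
    proof (cases "c = cs")
      case True then show ?thesis using ins recol_cong by blast
    next
      case False then show ?thesis using oth c unfolding recol_def by blast
    qed
    ultimately show ?thesis using out by blast
  qed
  then show "\<forall>x. x \<notin> leaves v \<longrightarrow> \<sigma>' x = \<sigma> x" "\<sigma>' ` leaves v \<subseteq> \<sigma> ` leaves v"
    "\<forall>c\<in>set (children v). recol \<sigma> \<sigma>' (leaves c)" by blast+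
qed

lemma step_recol_sub:
  assumes v: "v \<in> subtrees T" "is_inner v" and st: "proc_step E \<sigma> v \<sigma>'"
    and u: "u \<in> subtrees T" "v \<notin> subtrees u"
  shows "recol \<sigma> \<sigma>' (leaves u)"
proof -
  have "u \<in> subtrees v \<or> leaves u \<inter> leaves v = {}" using laminar[OF wfT u(1) v(1)] u(2) by blast
  then show ?thesis
  proof
    assume uv: "u \<in> subtrees v"
    have "u \<noteq> v" using u(2) subtrees_refl[of v] by auto
    then obtain c where c: "c \<in> set (children v)" "u \<in> subtrees c" using proper_sub_child uv by blast
    have "recol \<sigma> \<sigma>' (leaves c)" using step_facts(3)[OF v st] c(1) by blast
    then show ?thesis using recol_mono leaves_mono[OF c(2)] by blast
  next
    assume "leaves u \<inter> leaves v = {}"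
    then have "\<forall>x\<in>leaves u. \<sigma>' x = \<sigma> x" using step_facts(1)[OF v st] by blast
    then show ?thesis by (rule recol_cong)
  qed
qed

end

lemma child_size: assumes c: "c \<in> set (children v)" shows "size c < size v"
proof (cases v)
  case (Leaf x) then show ?thesis using c by simp
next
  case (Inner b ts)
  then have "size c \<le> size_list size ts" using c by (simp add: size_list_estimation')
  then show ?thesis using Inner by simp
qed

lemma has_child_inner: "c \<in> set (children v) \<Longrightarrow> is_inner v"
  by (cases v) auto

context ctx begin

definition downclosed :: "'a cotree set \<Rightarrow> bool" where
  "downclosed D \<longleftrightarrow> (\<forall>u\<in>D. \<forall>w\<in>subtrees u. is_inner w \<longrightarrow> w \<in> D)"

definition top_ok :: "'a cotree set \<Rightarrow> 'a cotree \<Rightarrow> bool" where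
  "top_ok D u \<longleftrightarrow> (\<forall>p\<in>subtrees T. u \<in> subtrees p \<and> u \<noteq> p \<longrightarrow> p \<notin> D)"

definition cond :: "'a cotree set \<Rightarrow> 'a cotree \<Rightarrow> bool" where
  "cond D v \<longleftrightarrow> v \<in> subtrees T \<and> is_inner v \<and> v \<notin> D \<and> (\<forall>w\<in>subtrees v. is_inner w \<and> w \<noteq> v \<longrightarrow> w \<in> D)"

definition Inv_base :: "('a \<Rightarrow> 'c) \<Rightarrow> 'a cotree set \<Rightarrow> ('a \<Rightarrow> 'c) \<Rightarrow> bool" where
  "Inv_base \<sigma>0 D \<sigma> \<longleftrightarrow> D \<subseteq> {u \<in> subtrees T. is_inner u} \<and> downclosed D \<and>
     (\<forall>u\<in>subtrees T. top_ok D u \<longrightarrow> \<sigma> ` leaves u \<subseteq> \<sigma>0 ` leaves u)"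

lemma anc_child:
  assumes v: "v \<in> subtrees T" and c: "c \<in> set (children v)" and p: "p \<in> subtrees T" "c \<in> subtrees p" "c \<noteq> p"
  shows "v \<in> subtrees p"
proof -
  have cT: "c \<in> subtrees T" using child_T[OF v c] .
  have vi: "is_inner v" using has_child_inner[OF c] .
  have ne: "leaves c \<noteq> {}" using sub_ne[OF cT] .
  have lcv: "leaves c \<subseteq> leaves v" using leaves_mono[OF child_subtree[OF c]] .
  have lcp: "leaves c \<subseteq> leaves p" using leaves_mono[OF p(2)] .
  have "p \<in> subtrees v \<or> v \<in> subtrees p \<or> leaves p \<inter> leaves v = {}" using laminar[OF wfT p(1) v] .
  then show ?thesis
  proof (elim disjE)
    assume pv: "p \<in> subtrees v"
    show ?thesis
    proof (cases "p = v")
      case True then show ?thesis using subtrees_refl by simp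
    next
      case False
      then obtain c' where c': "c' \<in> set (children v)" "p \<in> subtrees c'" using proper_sub_child[OF pv] by blast
      have cc': "c \<in> subtrees c'" using subtrees_transI[OF c'(2) p(2)] .
      show ?thesis
      proof (cases "c' = c")
        case True
        then have "p = c" using sub_antisym[OF c'(2)] p(2) by simp
        then show ?thesis using p(3) by simp
      next
        case False
        have "leaves c' \<inter> leaves c = {}" using disj_children[OF v vi c'(1) c False] .
        moreover have "leaves c \<subseteq> leaves c'" using leaves_mono[OF cc'] .
        ultimately show ?thesis using ne by blast
      qed
    qed
  next
    assume "v \<in> subtrees p" then show ?thesis .
  next
    assume "leaves p \<inter> leaves v = {}"
    then show ?thesis using ne lcv lcp by blast
  qed
qed

lemma top_mono: "top_ok (insert v D) u \<Longrightarrow> top_ok D u"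
  unfolding top_ok_def by blast

lemma base_step:
  assumes I: "Inv_base \<sigma>0 D \<sigma>" and cd: "cond D v" and st: "proc_step E \<sigma> v \<sigma>'"
  shows "Inv_base \<sigma>0 (insert v D) \<sigma>'"
proof -
  have v: "v \<in> subtrees T" "is_inner v" "v \<notin> D" and dsc: "\<forall>w\<in>subtrees v. is_inner w \<and> w \<noteq> v \<longrightarrow> w \<in> D"
    using cd unfolding cond_def by blast+
  have I1: "D \<subseteq> {u \<in> subtrees T. is_inner u}" and I2: "downclosed D"
    and I3: "\<forall>u\<in>subtrees T. top_ok D u \<longrightarrow> \<sigma> ` leaves u \<subseteq> \<sigma>0 ` leaves u"
    using I unfolding Inv_base_def by blast+
  have out: "\<forall>x. x \<notin> leaves v \<longrightarrow> \<sigma>' x = \<sigma> x" and im: "\<sigma>' ` leaves v \<subseteq> \<sigma> ` leaves v"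
    using step_facts[OF v(1,2) st] by blast+
  have J1: "insert v D \<subseteq> {u \<in> subtrees T. is_inner u}" using I1 v by blast
  have J2: "downclosed (insert v D)"
    unfolding downclosed_def
  proof (intro ballI impI)
    fix u w assume u: "u \<in> insert v D" and w: "w \<in> subtrees u" "is_inner w"
    show "w \<in> insert v D"
    proof (cases "u = v")
      case True
      then show ?thesis using dsc w by blast
    next
      case False
      then have "u \<in> D" using u by blast
      then show ?thesis using I2 w unfolding downclosed_def by blast
    qed
  qed
  have J3: "\<sigma>' ` leaves u \<subseteq> \<sigma>0 ` leaves u" if u: "u \<in> subtrees T" "top_ok (insert v D) u" for u
  proof -
    have old: "\<sigma> ` leaves u \<subseteq> \<sigma>0 ` leaves u" using I3 u(1) top_mono[OF u(2)] by blast
    have "u \<in> subtrees v \<or> v \<in> subtrees u \<or> leaves u \<inter> leaves v = {}" using laminar[OF wfT u(1) v(1)] .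
    moreover have "\<sigma>' ` leaves u \<subseteq> \<sigma> ` leaves u" if vu: "v \<in> subtrees u"
    proof
      fix y assume "y \<in> \<sigma>' ` leaves u"
      then obtain x where x: "x \<in> leaves u" "y = \<sigma>' x" by blast
      show "y \<in> \<sigma> ` leaves u"
      proof (cases "x \<in> leaves v")
        case True
        then have "y \<in> \<sigma> ` leaves v" using im x(2) by blast
        then show ?thesis using leaves_mono[OF vu] by blast
      next
        case False then show ?thesis using out x by simp
      qed
    qed
    moreover have "\<sigma>' ` leaves u \<subseteq> \<sigma> ` leaves u" if "leaves u \<inter> leaves v = {}"
    proof -
      have "\<forall>x\<in>leaves u. \<sigma>' x = \<sigma> x" using out that by blast
      then show ?thesis by (simp add: image_subset_iff)
    qed
    moreover have False if "u \<in> subtrees v" "v \<notin> subtrees u"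
    proof -
      have "u \<noteq> v" using that(2) subtrees_refl[of v] by auto
      then have "v \<notin> insert v D" using u(2) v(1) that(1) unfolding top_ok_def by blast
      then show False by simp
    qed
    ultimately have "\<sigma>' ` leaves u \<subseteq> \<sigma> ` leaves u" by blast
    then show ?thesis using old by (rule order_trans)
  qed
  show ?thesis unfolding Inv_base_def using J1 J2 J3 by blast
qed

lemma other_recol:
  assumes I: "Inv_base \<sigma>0 D \<sigma>" and cd: "cond D v" and st: "proc_step E \<sigma> v \<sigma>'"
    and u: "u \<in> subtrees T" "u \<in> D \<or> \<not> is_inner u"
  shows "recol \<sigma> \<sigma>' (leaves u)"
proof -
  have v: "v \<in> subtrees T" "is_inner v" "v \<notin> D" using cd unfolding cond_def by blast+
  have "v \<notin> subtrees u"
  proof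
    assume vu: "v \<in> subtrees u"
    show False
    proof (cases "u \<in> D")
      case True
      then have "v \<in> D" using I vu v(2) unfolding Inv_base_def downclosed_def by blast
      then show False using v(3) by contradiction
    next
      case False
      then obtain x where "u = Leaf x" using u(2) leaf_cases by blast
      then show False using vu v(2) by simp
    qed
  qed
  then show ?thesis using step_recol_sub[OF v(1,2) st u(1)] by blast
qed

lemma child_status: "cond D v \<Longrightarrow> c \<in> set (children v) \<Longrightarrow> c \<in> D \<or> \<not> is_inner c"
proof -
  assume cd: "cond D v" and c: "c \<in> set (children v)"
  have "c \<noteq> v" using child_size[OF c] by auto
  moreover have "c \<in> subtrees v" using child_subtree[OF c] .
  ultimately show ?thesis using cd unfolding cond_def by blast
qed

lemma child_top:
  assumes I: "Inv_base \<sigma>0 D \<sigma>" and cd: "cond D v" and c: "c \<in> set (children v)"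
  shows "top_ok D c"
  unfolding top_ok_def
proof (intro ballI impI)
  fix p assume p: "p \<in> subtrees T" "c \<in> subtrees p \<and> c \<noteq> p"
  have v: "v \<in> subtrees T" "is_inner v" "v \<notin> D" using cd unfolding cond_def by blast+
  have "v \<in> subtrees p" using anc_child[OF v(1) c p(1)] p(2) by blast
  then show "p \<notin> D" using I v unfolding Inv_base_def downclosed_def by blast
qed

lemma child_colors_disj:
  assumes I: "Inv_base \<sigma>0 D \<sigma>" and cd: "cond D v" and inj: "inj_on \<sigma>0 V"
    and c: "c1 \<in> set (children v)" "c2 \<in> set (children v)" "c1 \<noteq> c2"
  shows "\<sigma> ` leaves c1 \<inter> \<sigma> ` leaves c2 = {}"
proof -
  have v: "v \<in> subtrees T" "is_inner v" using cd unfolding cond_def by blast+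
  have c1T: "c1 \<in> subtrees T" and c2T: "c2 \<in> subtrees T" using child_T v(1) c by blast+
  have "\<sigma> ` leaves c1 \<subseteq> \<sigma>0 ` leaves c1" using I c1T child_top[OF I cd c(1)] unfolding Inv_base_def by blast
  moreover have "\<sigma> ` leaves c2 \<subseteq> \<sigma>0 ` leaves c2" using I c2T child_top[OF I cd c(2)] unfolding Inv_base_def by blast
  moreover have "\<sigma>0 ` leaves c1 \<inter> \<sigma>0 ` leaves c2 = \<sigma>0 ` (leaves c1 \<inter> leaves c2)"
    using inj_on_image_Int[OF inj sub_leaves[OF c1T] sub_leaves[OF c2T]] by simp
  moreover have "leaves c1 \<inter> leaves c2 = {}" using disj_children[OF v c] .
  ultimately show ?thesis by blast
qed

end

context ctx begin

lemma join_good: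
  assumes v: "v \<in> subtrees T" "is_inner v" "label v"
    and g: "\<forall>c\<in>set (children v). good E \<sigma> (leaves c)"
    and dj: "\<forall>c1\<in>set (children v). \<forall>c2\<in>set (children v). c1 \<noteq> c2 \<longrightarrow> \<sigma> ` leaves c1 \<inter> \<sigma> ` leaves c2 = {}"
  shows "good E \<sigma> (leaves v)"
proof -
  let ?C = "set (children v)"
  have finC: "finite ?C" by simp
  have finL: "finite (leaves u)" for u by (rule finite_leaves)
  have LV: "leaves v = (\<Union>c\<in>?C. leaves c)" using leaves_children[OF v(2)] .
  have pr: "proper_coloring E (leaves v) \<sigma>"
    unfolding proper_coloring_def
  proof (intro ballI impI)
    fix x y assume x: "x \<in> leaves v" and y: "y \<in> leaves v" and e: "E x y"
    obtain c1 where c1: "c1 \<in> ?C" "x \<in> leaves c1" using in_child[OF v(2) x] by blast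
    obtain c2 where c2: "c2 \<in> ?C" "y \<in> leaves c2" using in_child[OF v(2) y] by blast
    show "\<sigma> x \<noteq> \<sigma> y"
    proof (cases "c1 = c2")
      case True
      then have "proper_coloring E (leaves c1) \<sigma>" using g c1(1) unfolding good_def by blast
      then show ?thesis using c1(2) c2(2) True e unfolding proper_coloring_def by blast
    next
      case False
      then have "\<sigma> ` leaves c1 \<inter> \<sigma> ` leaves c2 = {}" using dj c1(1) c2(1) by blast
      then show ?thesis using c1(2) c2(2) by blast
    qed
  qed
  have im: "\<sigma> ` leaves v = (\<Union>c\<in>?C. \<sigma> ` leaves c)" using LV by blast
  have "card (\<sigma> ` leaves v) = (\<Sum>c\<in>?C. card (\<sigma> ` leaves c))"
    unfolding im using finC dj by (intro card_UN_disjoint) (auto simp: finL)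
  also have "\<dots> = (\<Sum>c\<in>?C. chi E (leaves c))"
    using g unfolding good_def by (intro sum.cong) auto
  finally have cs: "card (\<sigma> ` leaves v) = (\<Sum>c\<in>?C. chi E (leaves c))" .
  obtain \<nu> :: "'a \<Rightarrow> nat" where nu: "proper_coloring E (leaves v) \<nu>" "card (\<nu> ` leaves v) = chi E (leaves v)"
    using chi_attained[of "leaves v" E, OF finL irr] by blast
  have nudj: "\<forall>c1\<in>?C. \<forall>c2\<in>?C. c1 \<noteq> c2 \<longrightarrow> \<nu> ` leaves c1 \<inter> \<nu> ` leaves c2 = {}"
  proof (intro ballI impI)
    fix c1 c2 assume c: "c1 \<in> ?C" "c2 \<in> ?C" "c1 \<noteq> c2"
    show "\<nu> ` leaves c1 \<inter> \<nu> ` leaves c2 = {}"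
    proof (rule ccontr)
      assume "\<nu> ` leaves c1 \<inter> \<nu> ` leaves c2 \<noteq> {}"
      then obtain x y where xy: "x \<in> leaves c1" "y \<in> leaves c2" "\<nu> x = \<nu> y" by blast
      have "E x y" using cross[OF v(1,2) c xy(1,2)] v(3) by simp
      moreover have "x \<in> leaves v" "y \<in> leaves v" using xy(1,2) c(1,2) LV by blast+
      ultimately have "\<nu> x \<noteq> \<nu> y" using nu(1) unfolding proper_coloring_def by blast
      then show False using xy(3) by contradiction
    qed
  qed
  have imn: "\<nu> ` leaves v = (\<Union>c\<in>?C. \<nu> ` leaves c)" using LV by blast
  have "card (\<nu> ` leaves v) = (\<Sum>c\<in>?C. card (\<nu> ` leaves c))"
    unfolding imn using finC nudj by (intro card_UN_disjoint) (auto simp: finL)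
  moreover have "(\<Sum>c\<in>?C. chi E (leaves c)) \<le> (\<Sum>c\<in>?C. card (\<nu> ` leaves c))"
  proof (rule sum_mono)
    fix c assume c: "c \<in> ?C"
    have "proper_coloring E (leaves c) \<nu>" using nu(1) c LV unfolding proper_coloring_def by blast
    then show "chi E (leaves c) \<le> card (\<nu> ` leaves c)" using chi_le_card finL by blast
  qed
  ultimately have "card (\<sigma> ` leaves v) \<le> chi E (leaves v)" using cs nu(2) by simp
  moreover have "chi E (leaves v) \<le> card (\<sigma> ` leaves v)" using chi_le_card[OF finL pr] .
  ultimately show ?thesis unfolding good_def using pr by simp
qed

lemma union_good:
  assumes v: "v \<in> subtrees T" "is_inner v" "\<not> label v" and st: "proc_step E \<sigma> v \<sigma>'"
    and g: "\<forall>c\<in>set (children v). good E \<sigma> (leaves c)"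
  shows "good E \<sigma>' (leaves v)"
proof -
  let ?C = "set (children v)"
  have finL: "finite (leaves u)" for u by (rule finite_leaves)
  obtain cs where cs: "cs \<in> ?C" and "\<forall>c\<in>?C. chi E (leaves c) \<le> chi E (leaves cs)"
    and "\<forall>x. x \<notin> leaves v \<longrightarrow> \<sigma>' x = \<sigma> x"
    and ins: "\<forall>x\<in>leaves cs. \<sigma>' x = \<sigma> x"
    and oth: "\<forall>c\<in>?C. c \<noteq> cs \<longrightarrow> (\<exists>f. inj_on f (\<sigma> ` leaves c) \<and> f ` \<sigma> ` leaves c \<subseteq> \<sigma> ` leaves cs
        \<and> (\<forall>x\<in>leaves c. \<sigma>' x = f (\<sigma> x)))"
    using step0_fwd[OF v st] by blast
  have csv: "leaves cs \<subseteq> leaves v" using cs leaves_children[OF v(2)] by blast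
  have g': "good E \<sigma>' (leaves c)" if c: "c \<in> ?C" for c
    using good_recol g c step_facts(3)[OF v(1,2) st] by blast
  have im: "\<sigma>' ` leaves v = \<sigma> ` leaves cs"
  proof
    show "\<sigma>' ` leaves v \<subseteq> \<sigma> ` leaves cs"
    proof
      fix y assume "y \<in> \<sigma>' ` leaves v"
      then obtain x where x: "x \<in> leaves v" "y = \<sigma>' x" by blast
      obtain c where c: "c \<in> ?C" "x \<in> leaves c" using in_child[OF v(2) x(1)] by blast
      show "y \<in> \<sigma> ` leaves cs"
      proof (cases "c = cs")
        case True then show ?thesis using ins c x(2) by simp
      next
        case False
        then obtain f where f: "f ` \<sigma> ` leaves c \<subseteq> \<sigma> ` leaves cs" "\<forall>x\<in>leaves c. \<sigma>' x = f (\<sigma> x)"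
          using oth c(1) by blast
        have "y = f (\<sigma> x)" using f(2) c(2) x(2) by simp
        moreover have "f (\<sigma> x) \<in> \<sigma> ` leaves cs" using f(1) c(2) by blast
        ultimately show ?thesis by simp
      qed
    qed
  next
    show "\<sigma> ` leaves cs \<subseteq> \<sigma>' ` leaves v"
    proof
      fix y assume "y \<in> \<sigma> ` leaves cs"
      then obtain x where x: "x \<in> leaves cs" "y = \<sigma> x" by blast
      then have "y = \<sigma>' x" using ins by simp
      then show "y \<in> \<sigma>' ` leaves v" using x(1) csv by blast
    qed
  qed
  have pr: "proper_coloring E (leaves v) \<sigma>'"
    unfolding proper_coloring_def
  proof (intro ballI impI)
    fix x y assume x: "x \<in> leaves v" and y: "y \<in> leaves v" and e: "E x y"
    obtain c1 where c1: "c1 \<in> ?C" "x \<in> leaves c1" using in_child[OF v(2) x] by blast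
    obtain c2 where c2: "c2 \<in> ?C" "y \<in> leaves c2" using in_child[OF v(2) y] by blast
    have "c1 = c2"
    proof (rule ccontr)
      assume "c1 \<noteq> c2"
      then have "E x y = label v" using cross[OF v(1,2) c1(1) c2(1) _ c1(2) c2(2)] by blast
      then show False using e v(3) by simp
    qed
    then have "proper_coloring E (leaves c1) \<sigma>'" using g' c1(1) unfolding good_def by blast
    then show "\<sigma>' x \<noteq> \<sigma>' y" using c1(2) c2(2) \<open>c1 = c2\<close> e unfolding proper_coloring_def by blast
  qed
  have "card (\<sigma>' ` leaves v) = chi E (leaves cs)" using im g cs unfolding good_def by simp
  moreover have "chi E (leaves v) \<le> card (\<sigma>' ` leaves v)" using chi_le_card[OF finL pr] .
  moreover have "chi E (leaves cs) \<le> chi E (leaves v)" using chi_mono[of "leaves v" "leaves cs" E, OF finite_leaves csv irr] .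
  ultimately show ?thesis unfolding good_def using pr by simp
qed

definition Inv1 :: "('a \<Rightarrow> 'c) \<Rightarrow> 'a cotree set \<Rightarrow> ('a \<Rightarrow> 'c) \<Rightarrow> bool" where
  "Inv1 \<sigma>0 D \<sigma> \<longleftrightarrow> Inv_base \<sigma>0 D \<sigma> \<and> (\<forall>u\<in>subtrees T. (u \<in> D \<or> \<not> is_inner u) \<longrightarrow> good E \<sigma> (leaves u))"

lemma inv1_step:
  assumes inj: "inj_on \<sigma>0 V" and I: "Inv1 \<sigma>0 D \<sigma>" and cd: "cond D v" and st: "proc_step E \<sigma> v \<sigma>'"
  shows "Inv1 \<sigma>0 (insert v D) \<sigma>'"
proof -
  have IB: "Inv_base \<sigma>0 D \<sigma>" and IG: "\<forall>u\<in>subtrees T. (u \<in> D \<or> \<not> is_inner u) \<longrightarrow> good E \<sigma> (leaves u)"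
    using I unfolding Inv1_def by blast+
  have v: "v \<in> subtrees T" "is_inner v" using cd unfolding cond_def by blast+
  have gc: "\<forall>c\<in>set (children v). good E \<sigma> (leaves c)"
    using IG child_status[OF cd] child_T[OF v(1)] by blast
  have gv: "good E \<sigma>' (leaves v)"
  proof (cases "label v")
    case True
    then have "\<sigma>' = \<sigma>" using step_label st by blast
    moreover have "good E \<sigma> (leaves v)"
      using join_good[OF v True gc] child_colors_disj[OF IB cd inj] by blast
    ultimately show ?thesis by simp
  next
    case False
    show ?thesis using union_good[OF v False st gc] .
  qed
  have "good E \<sigma>' (leaves u)" if u: "u \<in> subtrees T" "u \<in> insert v D \<or> \<not> is_inner u" for u
  proof (cases "u = v")
    case True then show ?thesis using gv by simp
  next
    case False
    then have u': "u \<in> D \<or> \<not> is_inner u" using u(2) by blast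
    then show ?thesis using good_recol IG u(1) other_recol[OF IB cd st u(1) u'] by blast
  qed
  then show ?thesis unfolding Inv1_def using base_step[OF IB cd st] by blast
qed

fun okl :: "'a cotree set \<Rightarrow> 'a cotree list \<Rightarrow> bool" where
  "okl D [] = True"
| "okl D (v # ws) = (cond D v \<and> okl (insert v D) ws)"

lemma run1:
  assumes "proc_run E \<sigma> ws \<sigma>f" "inj_on \<sigma>0 V"
  shows "Inv1 \<sigma>0 D \<sigma> \<Longrightarrow> okl D ws \<Longrightarrow> Inv1 \<sigma>0 (D \<union> set ws) \<sigma>f"
  using assms(1)
proof (induction arbitrary: D rule: proc_run.induct)
  case (Nil \<sigma>) then show ?case by simp
next
  case (Cons \<sigma> v \<sigma>' vs \<sigma>'')
  have c: "cond D v" "okl (insert v D) vs" using Cons.prems(2) by simp_all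
  have "Inv1 \<sigma>0 (insert v D) \<sigma>'" using inv1_step[OF assms(2) Cons.prems(1) c(1) Cons.hyps(1)] .
  then have "Inv1 \<sigma>0 (insert v D \<union> set vs) \<sigma>''" using Cons.IH c(2) by blast
  then show ?case by simp
qed

lemma okl_intro: "(\<forall>i<length ws. cond (D \<union> set (take i ws)) (ws ! i)) \<Longrightarrow> okl D ws"
proof (induction ws arbitrary: D)
  case Nil then show ?case by simp
next
  case (Cons v ws)
  have "cond (D \<union> set (take 0 (v # ws))) ((v # ws) ! 0)" using Cons.prems[rule_format, of 0] by simp
  then have "cond D v" by simp
  moreover have "\<forall>i<length ws. cond (insert v D \<union> set (take i ws)) (ws ! i)"
  proof (intro allI impI)
    fix i assume "i < length ws"
    then have "cond (D \<union> set (take (Suc i) (v # ws))) ((v # ws) ! Suc i)" using Cons.prems[rule_format, of "Suc i"] by simp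
    then show "cond (insert v D \<union> set (take i ws)) (ws ! i)" by simp
  qed
  ultimately show ?case using Cons.IH by simp
qed

lemma bottom_okl:
  assumes "bottom_up_order T vs"
  shows "okl {} vs"
proof -
  have dis: "distinct vs" and sv: "set vs = {u \<in> subtrees T. is_inner u}"
    and ord: "\<forall>i<length vs. \<forall>j<length vs. vs ! i \<in> subtrees (vs ! j) \<and> vs ! i \<noteq> vs ! j \<longrightarrow> i < j"
    using assms unfolding bottom_up_order_def by blast+
  have "cond (set (take i vs)) (vs ! i)" if i: "i < length vs" for i
  proof -
    have vi: "vs ! i \<in> subtrees T" "is_inner (vs ! i)" using sv i nth_mem by blast+
    have "vs ! i \<notin> set (take i vs)"
    proof
      assume "vs ! i \<in> set (take i vs)"
      then obtain j where j: "j < length (take i vs)" "take i vs ! j = vs ! i" by (metis in_set_conv_nth)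
      then have "j < i" "vs ! j = vs ! i" by auto
      then show False using dis i nth_eq_iff_index_eq by fastforce
    qed
    moreover have "w \<in> set (take i vs)" if w: "w \<in> subtrees (vs ! i)" "is_inner w" "w \<noteq> vs ! i" for w
    proof -
      have "w \<in> set vs" using sv w(1,2) subtrees_transI[OF vi(1) w(1)] by blast
      then obtain j where j: "j < length vs" "vs ! j = w" by (metis in_set_conv_nth)
      then have "j < i" using ord i w(1,3) by blast
      then show ?thesis using j by (metis in_set_conv_nth length_take min_less_iff_conj nth_take)
    qed
    ultimately show ?thesis unfolding cond_def using vi by blast
  qed
  then show ?thesis by (intro okl_intro) simp
qed

lemma good_cm: "u \<in> subtrees T \<Longrightarrow> \<forall>w\<in>subtrees T. good E \<sigma> (leaves w) \<Longrightarrow> color_minimal E \<sigma> (leaves u)"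
proof (induction u)
  case (Leaf x) then show ?case by (simp add: color_minimal.K1)
next
  case (Inner b ts)
  let ?u = "Inner b ts"
  let ?P = "leaves ` set ts"
  have u: "?u \<in> subtrees T" "is_inner ?u" using Inner.prems by simp_all
  have gu: "good E \<sigma> (leaves ?u)" using Inner.prems by blast
  have cm: "\<forall>W\<in>?P. color_minimal E \<sigma> W"
  proof
    fix W assume "W \<in> ?P"
    then obtain t where t: "t \<in> set ts" "W = leaves t" by blast
    have "t \<in> subtrees T" using child_T[OF u(1)] t(1) by simp
    then show "color_minimal E \<sigma> W" using Inner.IH[OF t(1)] Inner.prems(2) t(2) by blast
  qed
  have part: "is_partition ?P (leaves ?u)"
    unfolding is_partition_def
  proof (intro conjI ballI impI)
    fix W assume "W \<in> ?P" then show "W \<noteq> {}" using sub_ne child_T[OF u(1)] by fastforce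
  next
    show "\<Union> ?P = leaves ?u" by simp
  next
    fix W1 W2 assume "W1 \<in> ?P" "W2 \<in> ?P" "W1 \<noteq> W2"
    then show "W1 \<inter> W2 = {}" using disj_children[OF u] by fastforce
  qed
  have "card (set ts) \<ge> 2"
    using wf_inner(1)[OF sub_wf[OF u(1)] u(2)] wf_distinct_children[OF sub_wf[OF u(1)] u(2)]
    by (simp add: distinct_card)
  moreover have "inj_on leaves (set ts)"
    using child_leaves_inj[OF u] unfolding inj_on_def by simp
  ultimately have cP: "card ?P \<ge> 2" by (simp add: card_image)
  have cr: "\<forall>W1\<in>?P. \<forall>W2\<in>?P. W1 \<noteq> W2 \<longrightarrow> (\<forall>x\<in>W1. \<forall>y\<in>W2. E x y = b)"
  proof (intro ballI impI)
    fix W1 W2 x y assume W: "W1 \<in> ?P" "W2 \<in> ?P" "W1 \<noteq> W2" and xy: "x \<in> W1" "y \<in> W2"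
    obtain t1 where t1: "t1 \<in> set ts" "W1 = leaves t1" using W(1) by blast
    obtain t2 where t2: "t2 \<in> set ts" "W2 = leaves t2" using W(2) by blast
    have "t1 \<noteq> t2" using W(3) t1(2) t2(2) by blast
    then show "E x y = b" using cross[OF u, of t1 t2 x y] t1 t2 xy by simp
  qed
  have pr: "proper_coloring E (leaves ?u) \<sigma>" "card (\<sigma> ` leaves ?u) = chi E (leaves ?u)"
    using gu unfolding good_def by blast+
  show ?case
  proof (cases b)
    case True
    have "all_edges_between E ?P" unfolding all_edges_between_def using cr True by blast
    then show ?thesis using color_minimal.join[OF pr part cP _ cm] by blast
  next
    case False
    have "no_edges_between E ?P" unfolding no_edges_between_def using cr False by blast
    then show ?thesis using color_minimal.union[OF pr part cP _ cm] by blast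
  qed
qed

lemma part1:
  fixes \<sigma> :: "'a \<Rightarrow> 'c"
  assumes "procedure_output E V T \<sigma>"
  shows "color_minimal E \<sigma> V"
proof -
  obtain \<sigma>0 vs where o: "inj_on \<sigma>0 V" "bottom_up_order T vs" "proc_run E \<sigma>0 vs \<sigma>"
    using assms unfolding procedure_output_def by blast
  have I0: "Inv1 \<sigma>0 {} \<sigma>0"
    unfolding Inv1_def Inv_base_def downclosed_def
  proof (intro conjI ballI impI)
    fix u assume u: "u \<in> subtrees T" "u \<in> {} \<or> \<not> is_inner u"
    then obtain x where x: "u = Leaf x" using leaf_cases by blast
    have "\<not> E x x" using irr by blast
    then have "chi E {x} = 1" by (rule chi_single)
    then show "good E \<sigma>0 (leaves u)" unfolding good_def proper_coloring_def using x \<open>\<not> E x x\<close> by simp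
  qed auto
  have "Inv1 \<sigma>0 ({} \<union> set vs) \<sigma>" using run1[OF o(3) o(1) I0 bottom_okl[OF o(2)]] .
  moreover have "set vs = {u \<in> subtrees T. is_inner u}" using o(2) unfolding bottom_up_order_def by blast
  ultimately have "\<forall>w\<in>subtrees T. good E \<sigma> (leaves w)" unfolding Inv1_def by auto
  then have "color_minimal E \<sigma> (leaves T)" using good_cm subtrees_refl by blast
  then show ?thesis using leavesT by simp
qed

end

lemma finite_subtrees: "finite (subtrees T)"
  by (induction T) auto

lemma subtrees_inner: "is_inner c \<Longrightarrow> subtrees c = insert c (\<Union>t\<in>set (children c). subtrees t)"
  by (cases c) auto

lemma step_equiv:
  fixes h :: "'c \<Rightarrow> 'c"
  assumes h: "inj h" and st: "proc_step E \<sigma> v \<sigma>'"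
  shows "proc_step E (h \<circ> \<sigma>) v (h \<circ> \<sigma>')"
proof (cases "label v")
  case True
  then have "\<sigma>' = \<sigma>" using st unfolding proc_step_def by simp
  then show ?thesis using True unfolding proc_step_def by simp
next
  case False
  let ?W = "leaves v"
  let ?G = "components E ?W"
  have "\<exists>Gs\<in>?G. (\<forall>C\<in>?G. chi E C \<le> chi E Gs) \<and>
          (\<exists>\<phi> :: 'a set \<Rightarrow> 'c \<Rightarrow> 'c.
             (\<forall>C\<in>?G. C \<noteq> Gs \<longrightarrow> inj_on (\<phi> C) (\<sigma> ` C) \<and> \<phi> C ` (\<sigma> ` C) \<subseteq> \<sigma> ` Gs) \<and>
             \<sigma>' = (\<lambda>x. if x \<in> ?W - Gs then \<phi> (component E ?W x) (\<sigma> x) else \<sigma> x))"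
    using st False unfolding proc_step_def Let_def by simp
  then obtain Gs where Gs: "Gs \<in> ?G" and mx: "\<forall>C\<in>?G. chi E C \<le> chi E Gs"
    and ex: "\<exists>\<phi> :: 'a set \<Rightarrow> 'c \<Rightarrow> 'c.
             (\<forall>C\<in>?G. C \<noteq> Gs \<longrightarrow> inj_on (\<phi> C) (\<sigma> ` C) \<and> \<phi> C ` (\<sigma> ` C) \<subseteq> \<sigma> ` Gs) \<and>
             \<sigma>' = (\<lambda>x. if x \<in> ?W - Gs then \<phi> (component E ?W x) (\<sigma> x) else \<sigma> x)"
    by (elim bexE conjE) (rule that)
  from ex obtain \<phi> :: "'a set \<Rightarrow> 'c \<Rightarrow> 'c" where
    ph: "\<forall>C\<in>?G. C \<noteq> Gs \<longrightarrow> inj_on (\<phi> C) (\<sigma> ` C) \<and> \<phi> C ` (\<sigma> ` C) \<subseteq> \<sigma> ` Gs"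
    and s': "\<sigma>' = (\<lambda>x. if x \<in> ?W - Gs then \<phi> (component E ?W x) (\<sigma> x) else \<sigma> x)"
    by (elim exE conjE) (rule that)
  define \<psi> where "\<psi> C = h \<circ> \<phi> C \<circ> inv h" for C
  have ih: "inv h (h y) = y" for y using h by (simp add: inv_f_f)
  have P1: "\<forall>C\<in>?G. C \<noteq> Gs \<longrightarrow> inj_on (\<psi> C) ((h \<circ> \<sigma>) ` C) \<and> \<psi> C ` ((h \<circ> \<sigma>) ` C) \<subseteq> (h \<circ> \<sigma>) ` Gs"
  proof (intro ballI impI conjI)
    fix C assume C: "C \<in> ?G" "C \<noteq> Gs"
    have i: "inj_on (\<phi> C) (\<sigma> ` C)" and s: "\<phi> C ` (\<sigma> ` C) \<subseteq> \<sigma> ` Gs" using ph C by blast+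
    show "inj_on (\<psi> C) ((h \<circ> \<sigma>) ` C)"
    proof (rule inj_onI)
      fix a b assume a: "a \<in> (h \<circ> \<sigma>) ` C" and b: "b \<in> (h \<circ> \<sigma>) ` C" and e: "\<psi> C a = \<psi> C b"
      obtain x where x: "x \<in> C" "a = h (\<sigma> x)" using a by auto
      obtain y where y: "y \<in> C" "b = h (\<sigma> y)" using b by auto
      have "h (\<phi> C (\<sigma> x)) = h (\<phi> C (\<sigma> y))" using e x(2) y(2) unfolding \<psi>_def by (simp add: ih)
      then have "\<phi> C (\<sigma> x) = \<phi> C (\<sigma> y)" using h by (simp add: inj_eq)
      then have "\<sigma> x = \<sigma> y" using i x(1) y(1) unfolding inj_on_def by blast
      then show "a = b" using x(2) y(2) by simp
    qed
    show "\<psi> C ` ((h \<circ> \<sigma>) ` C) \<subseteq> (h \<circ> \<sigma>) ` Gs"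
    proof
      fix z assume "z \<in> \<psi> C ` ((h \<circ> \<sigma>) ` C)"
      then obtain x where x: "x \<in> C" "z = \<psi> C (h (\<sigma> x))" by auto
      then have "z = h (\<phi> C (\<sigma> x))" unfolding \<psi>_def by (simp add: ih)
      moreover have "\<phi> C (\<sigma> x) \<in> \<sigma> ` Gs" using s x(1) by blast
      ultimately show "z \<in> (h \<circ> \<sigma>) ` Gs" by auto
    qed
  qed
  have P2: "h \<circ> \<sigma>' = (\<lambda>x. if x \<in> ?W - Gs then \<psi> (component E ?W x) ((h \<circ> \<sigma>) x) else (h \<circ> \<sigma>) x)"
    unfolding s' \<psi>_def by (rule ext) (simp add: ih)
  have "\<exists>Gs\<in>?G. (\<forall>C\<in>?G. chi E C \<le> chi E Gs) \<and>
          (\<exists>\<phi> :: 'a set \<Rightarrow> 'c \<Rightarrow> 'c.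
             (\<forall>C\<in>?G. C \<noteq> Gs \<longrightarrow> inj_on (\<phi> C) ((h \<circ> \<sigma>) ` C) \<and> \<phi> C ` ((h \<circ> \<sigma>) ` C) \<subseteq> (h \<circ> \<sigma>) ` Gs) \<and>
             h \<circ> \<sigma>' = (\<lambda>x. if x \<in> ?W - Gs then \<phi> (component E ?W x) ((h \<circ> \<sigma>) x) else (h \<circ> \<sigma>) x))"
    using Gs mx P1 P2 by blast
  then show ?thesis using False unfolding proc_step_def Let_def by simp
qed

lemma run_equiv:
  fixes h :: "'c \<Rightarrow> 'c"
  assumes h: "inj h"
  shows "proc_run E \<sigma> vs \<sigma>' \<Longrightarrow> proc_run E (h \<circ> \<sigma>) vs (h \<circ> \<sigma>')"
proof (induction rule: proc_run.induct)
  case (Nil \<sigma>) then show ?case by (rule proc_run.Nil)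
next
  case (Cons \<sigma> v \<sigma>' vs \<sigma>'')
  show ?case using proc_run.Cons[OF step_equiv[OF h Cons.hyps(1)] Cons.IH] .
qed

lemma join_recol:
  assumes r: "\<forall>c\<in>C. recol \<tau> \<sigma> (L c)"
    and ds: "\<forall>c1\<in>C. \<forall>c2\<in>C. c1 \<noteq> c2 \<longrightarrow> \<sigma> ` L c1 \<inter> \<sigma> ` L c2 = {}"
    and dt: "\<forall>c1\<in>C. \<forall>c2\<in>C. c1 \<noteq> c2 \<longrightarrow> \<tau> ` L c1 \<inter> \<tau> ` L c2 = {}"
  shows "recol \<tau> \<sigma> (\<Union>c\<in>C. L c)"
proof -
  have "\<forall>c\<in>C. \<exists>f. inj_on f (\<tau> ` L c) \<and> (\<forall>x\<in>L c. \<sigma> x = f (\<tau> x))" using r unfolding recol_def by blast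
  then obtain F where F: "\<forall>c\<in>C. inj_on (F c) (\<tau> ` L c) \<and> (\<forall>x\<in>L c. \<sigma> x = F c (\<tau> x))"
    by (rule bchoice[elim_format]) blast
  define ch where "ch d = (SOME c. c \<in> C \<and> d \<in> \<tau> ` L c)" for d
  have ch: "ch (\<tau> x) = c" if c: "c \<in> C" "x \<in> L c" for c x
  proof -
    have "ch (\<tau> x) \<in> C \<and> \<tau> x \<in> \<tau> ` L (ch (\<tau> x))"
      unfolding ch_def by (rule someI[of _ c]) (use c in blast)
    then show ?thesis using dt c by blast
  qed
  define f where "f d = F (ch d) d" for d
  have fx: "\<sigma> x = f (\<tau> x)" if c: "c \<in> C" "x \<in> L c" for c x
    using F c ch[OF c] unfolding f_def by simp
  have "inj_on f (\<tau> ` (\<Union>c\<in>C. L c))"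
  proof (rule inj_onI)
    fix a b assume a: "a \<in> \<tau> ` (\<Union>c\<in>C. L c)" and b: "b \<in> \<tau> ` (\<Union>c\<in>C. L c)" and e: "f a = f b"
    obtain x c1 where x: "c1 \<in> C" "x \<in> L c1" "a = \<tau> x" using a by blast
    obtain y c2 where y: "c2 \<in> C" "y \<in> L c2" "b = \<tau> y" using b by blast
    have sxy: "\<sigma> x = \<sigma> y" using fx[OF x(1,2)] fx[OF y(1,2)] e x(3) y(3) by simp
    have "c1 = c2"
    proof (rule ccontr)
      assume "c1 \<noteq> c2"
      then have "\<sigma> ` L c1 \<inter> \<sigma> ` L c2 = {}" using ds x(1) y(1) by blast
      then show False using sxy x(2) y(2) by blast
    qed
    then have "F c1 (\<tau> x) = F c1 (\<tau> y)" using F x(1,2) y(2) sxy by simp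
    moreover have "inj_on (F c1) (\<tau> ` L c1)" using F x(1) by blast
    ultimately have "\<tau> x = \<tau> y" using x(2) y(2) \<open>c1 = c2\<close> unfolding inj_on_def by blast
    then show "a = b" using x(3) y(3) by simp
  qed
  moreover have "\<forall>x\<in>(\<Union>c\<in>C. L c). \<sigma> x = f (\<tau> x)" using fx by blast
  ultimately show ?thesis unfolding recol_def by blast
qed

definition Qb :: "('a \<Rightarrow> 'a \<Rightarrow> bool) \<Rightarrow> bool \<Rightarrow> 'a set \<Rightarrow> bool" where
  "Qb E b A \<longleftrightarrow> (\<forall>x\<in>A. \<forall>y\<in>A. x = y \<or> E x y \<noteq> b \<or> (\<exists>z\<in>A. E x z \<noteq> b \<and> E z y \<noteq> b))"

lemma part_same:
  assumes P: "is_partition P W" and cr: "\<forall>W1\<in>P. \<forall>W2\<in>P. W1 \<noteq> W2 \<longrightarrow> (\<forall>x\<in>W1. \<forall>y\<in>W2. E x y = b)"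
    and W: "W1 \<in> P" "W2 \<in> P" "x \<in> W1" "y \<in> W2" and e: "x = y \<or> E x y \<noteq> b"
  shows "W1 = W2"
proof (rule ccontr)
  assume ne: "W1 \<noteq> W2"
  then have "W1 \<inter> W2 = {}" using P W(1,2) unfolding is_partition_def by blast
  then have "x \<noteq> y" using W(3,4) by blast
  moreover have "E x y = b" using cr W ne by blast
  ultimately show False using e by simp
qed

lemma Q_part:
  assumes P: "is_partition P W" and cr: "\<forall>W1\<in>P. \<forall>W2\<in>P. W1 \<noteq> W2 \<longrightarrow> (\<forall>x\<in>W1. \<forall>y\<in>W2. E x y = b)"
    and A: "A \<subseteq> W" "A \<noteq> {}" "Qb E b A"
  shows "\<exists>W'\<in>P. A \<subseteq> W'"
proof -
  have U: "\<Union>P = W" using P unfolding is_partition_def by blast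
  obtain x0 where x0: "x0 \<in> A" using A(2) by blast
  obtain W0 where W0: "W0 \<in> P" "x0 \<in> W0" using x0 A(1) U by blast
  have "y \<in> W0" if y: "y \<in> A" for y
  proof -
    obtain W1 where W1: "W1 \<in> P" "y \<in> W1" using y A(1) U by blast
    have "x0 = y \<or> E x0 y \<noteq> b \<or> (\<exists>z\<in>A. E x0 z \<noteq> b \<and> E z y \<noteq> b)" using A(3) x0 y unfolding Qb_def by blast
    then have "W0 = W1"
    proof (elim disjE)
      assume "x0 = y" then show ?thesis using part_same[OF P cr W0(1) W1(1) W0(2) W1(2)] by blast
    next
      assume "E x0 y \<noteq> b" then show ?thesis using part_same[OF P cr W0(1) W1(1) W0(2) W1(2)] by blast
    next
      assume "\<exists>z\<in>A. E x0 z \<noteq> b \<and> E z y \<noteq> b"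
      then obtain z where z: "z \<in> A" "E x0 z \<noteq> b" "E z y \<noteq> b" by blast
      obtain Wz where Wz: "Wz \<in> P" "z \<in> Wz" using z(1) A(1) U by blast
      have "W0 = Wz" using part_same[OF P cr W0(1) Wz(1) W0(2) Wz(2)] z(2) by blast
      moreover have "Wz = W1" using part_same[OF P cr Wz(1) W1(1) Wz(2) W1(2)] z(3) by blast
      ultimately show ?thesis by simp
    qed
    then show ?thesis using W1(2) by simp
  qed
  then show ?thesis using W0(1) by blast
qed

lemma part_not_one:
  assumes P: "is_partition P W" and c: "card P \<ge> 2" and W': "W' \<in> P" "W \<subseteq> W'"
  shows False
proof -
  have "\<exists>W''\<in>P. W'' \<noteq> W'"
  proof (rule ccontr)
    assume "\<not> ?thesis"
    then have "P \<subseteq> {W'}" by blast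
    then have "card P \<le> card {W'}" by (intro card_mono) simp_all
    then have "card P \<le> 1" by simp
    then show False using c by simp
  qed
  then obtain W'' where W'': "W'' \<in> P" "W'' \<noteq> W'" by blast
  have "W'' \<noteq> {}" "\<Union>P = W" "W'' \<inter> W' = {}" using P W'' W'(1) unfolding is_partition_def by blast+
  moreover have "W'' \<subseteq> W" using W''(1) \<open>\<Union>P = W\<close> by blast
  ultimately show False using W'(2) by blast
qed

context ctx begin

lemma cm0: "color_minimal E \<sigma> W \<Longrightarrow> good E \<sigma> W"
proof (induction rule: color_minimal.induct)
  case (K1 x)
  have "\<not> E x x" using irr by blast
  then have "chi E {x} = 1" by (rule chi_single)
  then show ?case unfolding good_def proper_coloring_def using \<open>\<not> E x x\<close> by simp
next
  case (union V P) then show ?case unfolding good_def by blast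
next
  case (join V P) then show ?case unfolding good_def by blast
qed

lemma Q_union:
  assumes w: "w \<in> subtrees T" "is_inner w" and S: "S \<subseteq> set (children w)" "\<forall>c\<in>S. \<exists>c'\<in>S. c' \<noteq> c"
    and l: "label w \<noteq> b"
  shows "Qb E b (\<Union>c\<in>S. leaves c)"
  unfolding Qb_def
proof (intro ballI)
  fix x y assume x: "x \<in> (\<Union>c\<in>S. leaves c)" and y: "y \<in> (\<Union>c\<in>S. leaves c)"
  obtain c1 where c1: "c1 \<in> S" "x \<in> leaves c1" using x by blast
  obtain c2 where c2: "c2 \<in> S" "y \<in> leaves c2" using y by blast
  have c1w: "c1 \<in> set (children w)" using S(1) c1(1) by blast
  have c2w: "c2 \<in> set (children w)" using S(1) c2(1) by blast
  show "x = y \<or> E x y \<noteq> b \<or> (\<exists>z\<in>(\<Union>c\<in>S. leaves c). E x z \<noteq> b \<and> E z y \<noteq> b)"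
  proof (cases "c1 = c2")
    case False
    have "E x y = label w" using cross[OF w c1w c2w False c1(2) c2(2)] .
    then have "E x y \<noteq> b" using l by simp
    then show ?thesis by (intro disjI2 disjI1)
  next
    case True
    obtain c' where c': "c' \<in> S" "c' \<noteq> c1" using S(2) c1(1) by blast
    have c'w: "c' \<in> set (children w)" using S(1) c'(1) by blast
    have c'T: "c' \<in> subtrees T" using child_T[OF w(1) c'w] .
    obtain z where z: "z \<in> leaves c'" using sub_ne[OF c'T] by blast
    have n1: "c1 \<noteq> c'" using c'(2) by simp
    have n2: "c' \<noteq> c2" using c'(2) True by simp
    have "E x z = label w" using cross[OF w c1w c'w n1 c1(2) z] .
    moreover have "E z y = label w" using cross[OF w c'w c2w n2 z c2(2)] .
    moreover have "z \<in> (\<Union>c\<in>S. leaves c)" using z c'(1) by blast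
    ultimately have "\<exists>z\<in>(\<Union>c\<in>S. leaves c). E x z \<noteq> b \<and> E z y \<noteq> b" using l by auto
    then show ?thesis by (intro disjI2)
  qed
qed

lemma Q_node:
  assumes c: "c \<in> subtrees T" and l: "is_inner c \<longrightarrow> label c \<noteq> b"
  shows "Qb E b (leaves c)"
proof (cases "is_inner c")
  case True
  have "Qb E b (\<Union>d\<in>set (children c). leaves d)"
    using Q_union[OF c True order_refl] two_children[OF sub_wf[OF c] True] l True by blast
  then show ?thesis using leaves_children[OF True] by simp
next
  case False
  then obtain x where "c = Leaf x" using leaf_cases by blast
  then show ?thesis unfolding Qb_def by simp
qed

lemma cm_main:
  assumes P: "is_partition P W" and cP: "card P \<ge> 2"
    and cr: "\<forall>W1\<in>P. \<forall>W2\<in>P. W1 \<noteq> W2 \<longrightarrow> (\<forall>x\<in>W1. \<forall>y\<in>W2. E x y = b)"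
    and IH: "\<forall>W'\<in>P. \<forall>w S. w \<in> subtrees T \<longrightarrow> is_inner w \<longrightarrow> S \<subseteq> set (children w) \<longrightarrow> S \<noteq> {} \<longrightarrow>
        W' = (\<Union>c\<in>S. leaves c) \<longrightarrow> (\<forall>c\<in>S. \<forall>u\<in>subtrees c. good E \<sigma> (leaves u))"
    and w: "w \<in> subtrees T" "is_inner w" "label w = b" and S: "S \<subseteq> set (children w)" "S \<noteq> {}"
    and WS: "W = (\<Union>c\<in>S. leaves c)"
  shows "\<forall>c\<in>S. \<forall>u\<in>subtrees c. good E \<sigma> (leaves u)"
proof
  fix c assume c: "c \<in> S"
  have U: "\<Union>P = W" using P unfolding is_partition_def by blast
  have one: "\<exists>W'\<in>P. leaves d \<subseteq> W'" if d: "d \<in> S" for d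
  proof -
    have dT: "d \<in> subtrees T" using child_T[OF w(1)] d S(1) by blast
    have "is_inner d \<longrightarrow> label d \<noteq> b" using disc[OF w(1) _ w(2)] d S(1) w(3) by blast
    then have "Qb E b (leaves d)" using Q_node[OF dT] by blast
    moreover have "leaves d \<subseteq> W" using d WS by blast
    ultimately show ?thesis using Q_part[OF P cr] sub_ne[OF dT] by blast
  qed
  obtain W' where W': "W' \<in> P" "leaves c \<subseteq> W'" using one c by blast
  define S' where "S' = {d \<in> S. leaves d \<subseteq> W'}"
  have "W' = (\<Union>d\<in>S'. leaves d)"
  proof
    show "(\<Union>d\<in>S'. leaves d) \<subseteq> W'" unfolding S'_def by blast
  next
    show "W' \<subseteq> (\<Union>d\<in>S'. leaves d)"
    proof
      fix y assume y: "y \<in> W'"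
      then have "y \<in> W" using U W'(1) by blast
      then obtain d where d: "d \<in> S" "y \<in> leaves d" using WS by blast
      obtain W'' where W'': "W'' \<in> P" "leaves d \<subseteq> W''" using one d(1) by blast
      have "W'' = W'" using part_same[OF P cr W''(1) W'(1) _ y, of y] W''(2) d(2) by blast
      then show "y \<in> (\<Union>d\<in>S'. leaves d)" using d W'' unfolding S'_def by blast
    qed
  qed
  moreover have "S' \<subseteq> set (children w)" "S' \<noteq> {}" "c \<in> S'" using S(1) c W'(2) unfolding S'_def by blast+
  ultimately show "\<forall>u\<in>subtrees c. good E \<sigma> (leaves u)" using IH W'(1) w(1,2) by blast
qed

lemma cm_general:
  assumes P: "is_partition P W" and cP: "card P \<ge> 2"
    and cr: "\<forall>W1\<in>P. \<forall>W2\<in>P. W1 \<noteq> W2 \<longrightarrow> (\<forall>x\<in>W1. \<forall>y\<in>W2. E x y = b)"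
    and IH: "\<forall>W'\<in>P. \<forall>w S. w \<in> subtrees T \<longrightarrow> is_inner w \<longrightarrow> S \<subseteq> set (children w) \<longrightarrow> S \<noteq> {} \<longrightarrow>
        W' = (\<Union>c\<in>S. leaves c) \<longrightarrow> (\<forall>c\<in>S. \<forall>u\<in>subtrees c. good E \<sigma> (leaves u))"
    and gW: "good E \<sigma> W"
    and w: "w \<in> subtrees T" "is_inner w" and S: "S \<subseteq> set (children w)" "S \<noteq> {}"
    and WS: "W = (\<Union>c\<in>S. leaves c)"
  shows "\<forall>c\<in>S. \<forall>u\<in>subtrees c. good E \<sigma> (leaves u)"
proof (cases "label w = b")
  case True show ?thesis using cm_main[OF P cP cr IH w(1,2) True S WS] by blast
next
  case False
  have U: "\<Union>P = W" using P unfolding is_partition_def by blast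
  have Wne: "W \<noteq> {}"
  proof -
    obtain c where c: "c \<in> S" using S(2) by blast
    have "leaves c \<noteq> {}" using sub_ne[OF child_T[OF w(1)]] c S(1) by blast
    moreover have "leaves c \<subseteq> W" unfolding WS using c by blast
    ultimately show ?thesis by blast
  qed
  show ?thesis
  proof (cases "\<forall>c\<in>S. \<exists>c'\<in>S. c' \<noteq> c")
    case True
    have "Qb E b W" using Q_union[OF w S(1) True False] WS by simp
    then obtain W' where "W' \<in> P" "W \<subseteq> W'" using Q_part[OF P cr order_refl Wne] by blast
    then show ?thesis using part_not_one[OF P cP] by blast
  next
    case False2: False
    then obtain c where c: "c \<in> S" "\<forall>c'\<in>S. c' = c" by blast
    then have Sc: "S = {c}" by blast
    then have Wc: "W = leaves c" using WS by simp
    have cT: "c \<in> subtrees T" using child_T[OF w(1)] c(1) S(1) by blast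
    show ?thesis
    proof (cases "is_inner c \<and> label c = b")
      case False3: False
      then have "Qb E b (leaves c)" using Q_node[OF cT] by blast
      then have "Qb E b W" using Wc by simp
      then obtain W' where "W' \<in> P" "W \<subseteq> W'" using Q_part[OF P cr order_refl Wne] by blast
      then show ?thesis using part_not_one[OF P cP] by blast
    next
      case True3: True
      have ci: "is_inner c" and cl: "label c = b" using True3 by blast+
      have ch: "set (children c) \<noteq> {}" using wf_inner(1)[OF sub_wf[OF cT] ci] by (cases "children c") auto
      have WS': "W = (\<Union>d\<in>set (children c). leaves d)" using Wc leaves_children[OF ci] by simp
      have A: "\<forall>d\<in>set (children c). \<forall>u\<in>subtrees d. good E \<sigma> (leaves u)"
        using cm_main[OF P cP cr IH cT ci cl order_refl ch WS'] .
      have B: "good E \<sigma> (leaves c)" using gW Wc by simp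
      have "\<forall>u\<in>subtrees c. good E \<sigma> (leaves u)"
      proof
        fix u assume "u \<in> subtrees c"
        then have "u = c \<or> (\<exists>d\<in>set (children c). u \<in> subtrees d)" using subtrees_inner[OF ci] by blast
        then show "good E \<sigma> (leaves u)" using A B by blast
      qed
      then show ?thesis using Sc by blast
    qed
  qed
qed

lemma cm_good:
  "color_minimal E \<sigma> W \<Longrightarrow> \<forall>w S. w \<in> subtrees T \<longrightarrow> is_inner w \<longrightarrow> S \<subseteq> set (children w) \<longrightarrow> S \<noteq> {} \<longrightarrow>
        W = (\<Union>c\<in>S. leaves c) \<longrightarrow> (\<forall>c\<in>S. \<forall>u\<in>subtrees c. good E \<sigma> (leaves u))"
proof (induction rule: color_minimal.induct)
  case (K1 x)
  show ?case
  proof (intro allI impI ballI)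
    fix w S c u assume w: "w \<in> subtrees T" "is_inner w" and S: "S \<subseteq> set (children w)" "S \<noteq> {}"
      and WS: "{x} = (\<Union>c\<in>S. leaves c)" and c: "c \<in> S" and u: "u \<in> subtrees c"
    have cT: "c \<in> subtrees T" using child_T[OF w(1)] c S(1) by blast
    have "leaves c \<subseteq> {x}" using WS c by blast
    then have "c = Leaf x" using single_leaf[OF sub_wf[OF cT]] by blast
    then have "u = Leaf x" using u by simp
    moreover have "good E \<sigma> {x}" using cm0[OF color_minimal.K1] .
    ultimately show "good E \<sigma> (leaves u)" by simp
  qed
next
  case (union V P)
  have cr: "\<forall>W1\<in>P. \<forall>W2\<in>P. W1 \<noteq> W2 \<longrightarrow> (\<forall>x\<in>W1. \<forall>y\<in>W2. E x y = False)"
    using union.hyps(5) unfolding no_edges_between_def by blast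
  have IH: "\<forall>W'\<in>P. \<forall>w S. w \<in> subtrees T \<longrightarrow> is_inner w \<longrightarrow> S \<subseteq> set (children w) \<longrightarrow> S \<noteq> {} \<longrightarrow>
        W' = (\<Union>c\<in>S. leaves c) \<longrightarrow> (\<forall>c\<in>S. \<forall>u\<in>subtrees c. good E \<sigma> (leaves u))"
    using union.IH by blast
  have gW: "good E \<sigma> V" using union.hyps(1,2) unfolding good_def by blast
  show ?case using cm_general[OF union.hyps(3,4) cr IH gW] by blast
next
  case (join V P)
  have cr: "\<forall>W1\<in>P. \<forall>W2\<in>P. W1 \<noteq> W2 \<longrightarrow> (\<forall>x\<in>W1. \<forall>y\<in>W2. E x y = True)"
    using join.hyps(5) unfolding all_edges_between_def by blast
  have IH: "\<forall>W'\<in>P. \<forall>w S. w \<in> subtrees T \<longrightarrow> is_inner w \<longrightarrow> S \<subseteq> set (children w) \<longrightarrow> S \<noteq> {} \<longrightarrow>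
        W' = (\<Union>c\<in>S. leaves c) \<longrightarrow> (\<forall>c\<in>S. \<forall>u\<in>subtrees c. good E \<sigma> (leaves u))"
    using join.IH by blast
  have gW: "good E \<sigma> V" using join.hyps(1,2) unfolding good_def by blast
  show ?case using cm_general[OF join.hyps(3,4) cr IH gW] by blast
qed

lemma all_good:
  assumes "color_minimal E \<sigma> V"
  shows "\<forall>u\<in>subtrees T. good E \<sigma> (leaves u)"
proof (cases "is_inner T")
  case False
  then obtain x where "T = Leaf x" using leaf_cases by blast
  then show ?thesis using cm0[OF assms] leavesT by simp
next
  case True
  have ch: "set (children T) \<noteq> {}" using wf_inner(1)[OF wfT True] by (cases "children T") auto
  have "\<forall>c\<in>set (children T). \<forall>u\<in>subtrees c. good E \<sigma> (leaves u)"
    using cm_good[OF assms] subtrees_refl[of T] True ch leaves_children[OF True] leavesT by auto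
  moreover have "good E \<sigma> (leaves T)" using cm0[OF assms] leavesT by simp
  ultimately show ?thesis
  proof (intro ballI)
    fix u assume A: "\<forall>c\<in>set (children T). \<forall>u\<in>subtrees c. good E \<sigma> (leaves u)" and B: "good E \<sigma> (leaves T)"
      and "u \<in> subtrees T"
    then have "u = T \<or> (\<exists>d\<in>set (children T). u \<in> subtrees d)" using subtrees_inner[OF True] by blast
    then show "good E \<sigma> (leaves u)" using A B by blast
  qed
qed

end

context ctx begin

lemma union_max:
  assumes v: "v \<in> subtrees T" "is_inner v" "\<not> label v" and G: "\<forall>u\<in>subtrees T. good E \<tau> (leaves u)"
  shows "\<exists>cs\<in>set (children v). \<tau> ` leaves cs = \<tau> ` leaves v \<and> (\<forall>c\<in>set (children v). chi E (leaves c) \<le> chi E (leaves cs))"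
proof -
  let ?C = "set (children v)"
  let ?g = "\<lambda>c. chi E (leaves c)"
  have finC: "finite ?C" by simp
  have neC: "?C \<noteq> {}" using wf_inner(1)[OF sub_wf[OF v(1)] v(2)] by (cases "children v") auto
  have "Max (?g ` ?C) \<in> ?g ` ?C" using finC neC by (intro Max_in) simp_all
  then obtain cs where cs: "cs \<in> ?C" "?g cs = Max (?g ` ?C)" by (rule imageE) simp
  have mx: "\<forall>c\<in>?C. ?g c \<le> ?g cs"
  proof
    fix c assume "c \<in> ?C"
    then have "?g c \<le> Max (?g ` ?C)" using finC by (intro Max_ge) simp_all
    then show "?g c \<le> ?g cs" using cs(2) by simp
  qed
  have "\<forall>c\<in>?C. \<exists>\<nu> :: 'a \<Rightarrow> nat. proper_coloring E (leaves c) \<nu> \<and> \<nu> ` leaves c \<subseteq> {0..<chi E (leaves c)}"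
  proof
    fix c show "\<exists>\<nu> :: 'a \<Rightarrow> nat. proper_coloring E (leaves c) \<nu> \<and> \<nu> ` leaves c \<subseteq> {0..<chi E (leaves c)}"
      using chi_range[of "leaves c" E, OF finite_leaves irr] .
  qed
  then obtain N :: "'a cotree \<Rightarrow> 'a \<Rightarrow> nat" where
    N: "\<forall>c\<in>?C. proper_coloring E (leaves c) (N c) \<and> N c ` leaves c \<subseteq> {0..<chi E (leaves c)}"
    by (rule bchoice[elim_format]) blast
  define chx where "chx x = (SOME c. c \<in> ?C \<and> x \<in> leaves c)" for x
  have chx: "chx x \<in> ?C \<and> x \<in> leaves (chx x)" if x: "x \<in> leaves v" for x
    unfolding chx_def using in_child[OF v(2) x] by (rule someI_ex[OF bexE]) blast
  define \<mu> where "\<mu> x = N (chx x) x" for x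
  have pr: "proper_coloring E (leaves v) \<mu>"
    unfolding proper_coloring_def
  proof (intro ballI impI)
    fix x y assume x: "x \<in> leaves v" and y: "y \<in> leaves v" and e: "E x y"
    have cx: "chx x \<in> ?C" "x \<in> leaves (chx x)" using chx[OF x] by blast+
    have cy: "chx y \<in> ?C" "y \<in> leaves (chx y)" using chx[OF y] by blast+
    have eq: "chx x = chx y"
    proof (rule ccontr)
      assume "chx x \<noteq> chx y"
      then have "E x y = label v" using cross[OF v(1,2) cx(1) cy(1) _ cx(2) cy(2)] by blast
      then show False using e v(3) by simp
    qed
    have "proper_coloring E (leaves (chx x)) (N (chx x))" using N cx(1) by blast
    then have "N (chx x) x \<noteq> N (chx x) y" using cx(2) cy(2) eq e unfolding proper_coloring_def by simp
    then show "\<mu> x \<noteq> \<mu> y" unfolding \<mu>_def using eq by simp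
  qed
  have "\<mu> ` leaves v \<subseteq> {0..<?g cs}"
  proof
    fix z assume "z \<in> \<mu> ` leaves v"
    then obtain x where x: "x \<in> leaves v" "z = \<mu> x" by blast
    have cx: "chx x \<in> ?C" "x \<in> leaves (chx x)" using chx[OF x(1)] by blast+
    have "N (chx x) x \<in> {0..<?g (chx x)}" using N cx by blast
    moreover have "?g (chx x) \<le> ?g cs" using mx cx(1) by blast
    ultimately show "z \<in> {0..<?g cs}" using x(2) unfolding \<mu>_def by simp
  qed
  then have "card (\<mu> ` leaves v) \<le> ?g cs" using card_mono[of "{0..<?g cs}" "\<mu> ` leaves v"] by simp
  moreover have "chi E (leaves v) \<le> card (\<mu> ` leaves v)" using chi_le_card[OF finite_leaves pr] .
  ultimately have le: "chi E (leaves v) \<le> ?g cs" by simp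
  have csT: "cs \<in> subtrees T" using child_T[OF v(1) cs(1)] .
  have gcs: "card (\<tau> ` leaves cs) = ?g cs" using G csT unfolding good_def by blast
  have gv: "card (\<tau> ` leaves v) = chi E (leaves v)" using G v(1) unfolding good_def by blast
  have sub: "\<tau> ` leaves cs \<subseteq> \<tau> ` leaves v" using cs(1) leaves_children[OF v(2)] by blast
  have "card (\<tau> ` leaves cs) \<le> card (\<tau> ` leaves v)" using sub by (intro card_mono) (simp_all add: finite_leaves)
  then have "card (\<tau> ` leaves cs) = card (\<tau> ` leaves v)" using le gcs gv by simp
  then have "\<tau> ` leaves cs = \<tau> ` leaves v" using card_subset_eq[OF _ sub] by (simp add: finite_leaves)
  then show ?thesis using cs(1) mx by blast
qed

definition Inv2 :: "('a \<Rightarrow> 'c) \<Rightarrow> ('a \<Rightarrow> 'c) \<Rightarrow> 'a cotree set \<Rightarrow> ('a \<Rightarrow> 'c) \<Rightarrow> bool" where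
  "Inv2 \<tau> \<sigma>0 D \<sigma> \<longleftrightarrow> Inv_base \<sigma>0 D \<sigma> \<and> (\<forall>u\<in>subtrees T. (u \<in> D \<or> \<not> is_inner u) \<longrightarrow> recol \<tau> \<sigma> (leaves u))"

lemma inv2_main:
  assumes inj: "inj_on \<sigma>0 V" and IB: "Inv_base \<sigma>0 D \<sigma>" and cd: "cond D v"
    and G: "\<forall>u\<in>subtrees T. good E \<tau> (leaves u)"
    and rc: "\<forall>c\<in>set (children v). recol \<tau> \<sigma> (leaves c)"
  shows "\<exists>\<sigma>'. proc_step E \<sigma> v \<sigma>' \<and> recol \<tau> \<sigma>' (leaves v)"
proof -
  let ?C = "set (children v)"
  have v: "v \<in> subtrees T" "is_inner v" using cd unfolding cond_def by blast+
  have LV: "leaves v = (\<Union>c\<in>?C. leaves c)" using leaves_children[OF v(2)] .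
  show ?thesis
  proof (cases "label v")
    case True
    have ds: "\<forall>c1\<in>?C. \<forall>c2\<in>?C. c1 \<noteq> c2 \<longrightarrow> \<sigma> ` leaves c1 \<inter> \<sigma> ` leaves c2 = {}"
      using child_colors_disj[OF IB cd inj] by blast
    have prt: "proper_coloring E (leaves v) \<tau>" using G v(1) unfolding good_def by blast
    have dt: "\<forall>c1\<in>?C. \<forall>c2\<in>?C. c1 \<noteq> c2 \<longrightarrow> \<tau> ` leaves c1 \<inter> \<tau> ` leaves c2 = {}"
    proof (intro ballI impI)
      fix c1 c2 assume c: "c1 \<in> ?C" "c2 \<in> ?C" "c1 \<noteq> c2"
      show "\<tau> ` leaves c1 \<inter> \<tau> ` leaves c2 = {}"
      proof (rule ccontr)
        assume "\<tau> ` leaves c1 \<inter> \<tau> ` leaves c2 \<noteq> {}"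
        then obtain x y where xy: "x \<in> leaves c1" "y \<in> leaves c2" "\<tau> x = \<tau> y" by blast
        have "E x y" using cross[OF v c xy(1,2)] True by simp
        moreover have "x \<in> leaves v" "y \<in> leaves v" using xy(1,2) c(1,2) LV by blast+
        ultimately have "\<tau> x \<noteq> \<tau> y" using prt unfolding proper_coloring_def by blast
        then show False using xy(3) by contradiction
      qed
    qed
    have "recol \<tau> \<sigma> (\<Union>c\<in>?C. leaves c)" using join_recol[OF rc ds dt] .
    then have "recol \<tau> \<sigma> (leaves v)" using LV by simp
    then show ?thesis using step_label_intro[OF True] by blast
  next
    case False
    obtain cs where cs: "cs \<in> ?C" "\<tau> ` leaves cs = \<tau> ` leaves v"
      and mx: "\<forall>c\<in>?C. chi E (leaves c) \<le> chi E (leaves cs)"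
      using union_max[OF v False G] by blast
    have "\<forall>c\<in>?C. \<exists>f. inj_on f (\<tau> ` leaves c) \<and> (\<forall>x\<in>leaves c. \<sigma> x = f (\<tau> x))" using rc unfolding recol_def by blast
    then obtain F where F: "\<forall>c\<in>?C. inj_on (F c) (\<tau> ` leaves c) \<and> (\<forall>x\<in>leaves c. \<sigma> x = F c (\<tau> x))"
      by (rule bchoice[elim_format]) blast
    have "inj_on (F cs) (\<tau> ` leaves cs)" using F cs(1) by blast
    then have Fcs: "inj_on (F cs) (\<tau> ` leaves v)" using cs(2) by simp
    define \<phi> where "\<phi> c y = F cs (inv_into (\<tau> ` leaves c) (F c) y)" for c y
    have phx: "\<phi> c (\<sigma> x) = F cs (\<tau> x)" if c: "c \<in> ?C" "x \<in> leaves c" for c x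
    proof -
      have "\<sigma> x = F c (\<tau> x)" using F c by blast
      moreover have "inv_into (\<tau> ` leaves c) (F c) (F c (\<tau> x)) = \<tau> x"
        using F c by (intro inv_into_f_f) auto
      ultimately show ?thesis unfolding \<phi>_def by simp
    qed
    have tcv: "\<tau> ` leaves c \<subseteq> \<tau> ` leaves v" if "c \<in> ?C" for c using that LV by blast
    have cond2: "\<forall>c\<in>?C. c \<noteq> cs \<longrightarrow> inj_on (\<phi> c) (\<sigma> ` leaves c) \<and> \<phi> c ` \<sigma> ` leaves c \<subseteq> \<sigma> ` leaves cs"
    proof (intro ballI impI conjI)
      fix c assume c: "c \<in> ?C" "c \<noteq> cs"
      show "inj_on (\<phi> c) (\<sigma> ` leaves c)"
      proof (rule inj_onI)
        fix a b assume a: "a \<in> \<sigma> ` leaves c" and b: "b \<in> \<sigma> ` leaves c" and e: "\<phi> c a = \<phi> c b"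
        obtain x where x: "x \<in> leaves c" "a = \<sigma> x" using a by blast
        obtain y where y: "y \<in> leaves c" "b = \<sigma> y" using b by blast
        have "F cs (\<tau> x) = F cs (\<tau> y)" using e phx[OF c(1) x(1)] phx[OF c(1) y(1)] x(2) y(2) by simp
        moreover have "\<tau> x \<in> \<tau> ` leaves v" "\<tau> y \<in> \<tau> ` leaves v" using tcv[OF c(1)] x(1) y(1) by blast+
        ultimately have "\<tau> x = \<tau> y" using Fcs unfolding inj_on_def by blast
        then show "a = b" using x y F c(1) by metis
      qed
      show "\<phi> c ` \<sigma> ` leaves c \<subseteq> \<sigma> ` leaves cs"
      proof
        fix z assume "z \<in> \<phi> c ` \<sigma> ` leaves c"
        then obtain x where x: "x \<in> leaves c" "z = \<phi> c (\<sigma> x)" by blast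
        have "\<tau> x \<in> \<tau> ` leaves cs" using tcv[OF c(1)] x(1) cs(2) by blast
        then obtain x' where x': "x' \<in> leaves cs" "\<tau> x = \<tau> x'" by blast
        have "z = F cs (\<tau> x')" using phx[OF c(1) x(1)] x(2) x'(2) by simp
        also have "\<dots> = \<sigma> x'" using F cs(1) x'(1) by simp
        finally show "z \<in> \<sigma> ` leaves cs" using x'(1) by blast
      qed
    qed
    obtain \<sigma>' where st: "proc_step E \<sigma> v \<sigma>'" and ins: "\<forall>x\<in>leaves cs. \<sigma>' x = \<sigma> x"
      and oth: "\<forall>c\<in>?C. c \<noteq> cs \<longrightarrow> (\<forall>x\<in>leaves c. \<sigma>' x = \<phi> c (\<sigma> x))"
      using step0_bwd[OF v False cs(1) mx cond2] by blast
    have "\<forall>x\<in>leaves v. \<sigma>' x = F cs (\<tau> x)"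
    proof
      fix x assume x: "x \<in> leaves v"
      obtain c where c: "c \<in> ?C" "x \<in> leaves c" using in_child[OF v(2) x] by blast
      show "\<sigma>' x = F cs (\<tau> x)"
      proof (cases "c = cs")
        case True then show ?thesis using ins F cs(1) c(2) by simp
      next
        case False then show ?thesis using oth c phx[OF c] by simp
      qed
    qed
    then have "recol \<tau> \<sigma>' (leaves v)" unfolding recol_def using Fcs by blast
    then show ?thesis using st by blast
  qed
qed

lemma inv2_step:
  assumes inj: "inj_on \<sigma>0 V" and I: "Inv2 \<tau> \<sigma>0 D \<sigma>" and cd: "cond D v"
    and G: "\<forall>u\<in>subtrees T. good E \<tau> (leaves u)"
  shows "\<exists>\<sigma>'. proc_step E \<sigma> v \<sigma>' \<and> Inv2 \<tau> \<sigma>0 (insert v D) \<sigma>'"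
proof -
  have IB: "Inv_base \<sigma>0 D \<sigma>" and IR: "\<forall>u\<in>subtrees T. (u \<in> D \<or> \<not> is_inner u) \<longrightarrow> recol \<tau> \<sigma> (leaves u)"
    using I unfolding Inv2_def by blast+
  have v: "v \<in> subtrees T" "is_inner v" using cd unfolding cond_def by blast+
  have rc: "\<forall>c\<in>set (children v). recol \<tau> \<sigma> (leaves c)"
    using IR child_status[OF cd] child_T[OF v(1)] by blast
  obtain \<sigma>' where st: "proc_step E \<sigma> v \<sigma>'" and rv: "recol \<tau> \<sigma>' (leaves v)"
    using inv2_main[OF inj IB cd G rc] by blast
  have "recol \<tau> \<sigma>' (leaves u)" if u: "u \<in> subtrees T" "u \<in> insert v D \<or> \<not> is_inner u" for u
  proof (cases "u = v")
    case True then show ?thesis using rv by simp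
  next
    case False
    then have u': "u \<in> D \<or> \<not> is_inner u" using u(2) by blast
    have "recol \<tau> \<sigma> (leaves u)" using IR u(1) u' by blast
    then show ?thesis using recol_trans other_recol[OF IB cd st u(1) u'] by blast
  qed
  then have "Inv2 \<tau> \<sigma>0 (insert v D) \<sigma>'" unfolding Inv2_def using base_step[OF IB cd st] by blast
  then show ?thesis using st by blast
qed

lemma run2:
  assumes inj: "inj_on \<sigma>0 V" and G: "\<forall>u\<in>subtrees T. good E \<tau> (leaves u)"
  shows "okl D ws \<Longrightarrow> Inv2 \<tau> \<sigma>0 D \<sigma> \<Longrightarrow> \<exists>\<sigma>f. proc_run E \<sigma> ws \<sigma>f \<and> Inv2 \<tau> \<sigma>0 (D \<union> set ws) \<sigma>f"
proof (induction ws arbitrary: D \<sigma>)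
  case Nil then show ?case using proc_run.Nil by fastforce
next
  case (Cons v ws)
  have c: "cond D v" "okl (insert v D) ws" using Cons.prems(1) by simp_all
  obtain \<sigma>' where st: "proc_step E \<sigma> v \<sigma>'" and I': "Inv2 \<tau> \<sigma>0 (insert v D) \<sigma>'"
    using inv2_step[OF inj Cons.prems(2) c(1) G] by blast
  obtain \<sigma>f where r: "proc_run E \<sigma>' ws \<sigma>f" "Inv2 \<tau> \<sigma>0 (insert v D \<union> set ws) \<sigma>f"
    using Cons.IH[OF c(2) I'] by blast
  have "proc_run E \<sigma> (v # ws) \<sigma>f" using proc_run.Cons[OF st r(1)] .
  moreover have "D \<union> set (v # ws) = insert v D \<union> set ws" by simp
  ultimately show ?case using r(2) by auto
qed

lemma exists_bottom_up: "\<exists>vs. bottom_up_order T vs"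
proof -
  have "finite {u \<in> subtrees T. is_inner u}" using finite_subtrees[of T] by simp
  then obtain xs where xs: "set xs = {u \<in> subtrees T. is_inner u}" "distinct xs"
    using finite_distinct_list by blast
  define vs where "vs = sort_key size xs"
  have srt: "sorted (map size vs)" unfolding vs_def by simp
  have "\<forall>i<length vs. \<forall>j<length vs. vs ! i \<in> subtrees (vs ! j) \<and> vs ! i \<noteq> vs ! j \<longrightarrow> i < j"
  proof (intro allI impI)
    fix i j assume i: "i < length vs" and j: "j < length vs" and s: "vs ! i \<in> subtrees (vs ! j) \<and> vs ! i \<noteq> vs ! j"
    have lt: "size (vs ! i) < size (vs ! j)" using size_sub_strict s by blast
    show "i < j"
    proof (rule ccontr)
      assume "\<not> i < j"
      then have "j \<le> i" by simp
      then have "map size vs ! j \<le> map size vs ! i" using sorted_nth_mono[OF srt] i by simp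
      then show False using lt i j by simp
    qed
  qed
  moreover have "distinct vs" "set vs = {u \<in> subtrees T. is_inner u}" using xs unfolding vs_def by simp_all
  ultimately show ?thesis unfolding bottom_up_order_def by blast
qed

lemma part2:
  fixes \<sigma> :: "'a \<Rightarrow> 'c"
  assumes inf: "infinite (UNIV :: 'c set)" and cm: "color_minimal E \<sigma> V"
  shows "\<exists>\<sigma>'. procedure_output E V T \<sigma>' \<and> (\<forall>x\<in>V. \<sigma>' x = \<sigma> x)"
proof -
  have G: "\<forall>u\<in>subtrees T. good E \<sigma> (leaves u)" using all_good[OF cm] .
  let ?A = "\<sigma> ` V"
  have finA: "finite ?A" using finV by simp
  have "infinite (UNIV - ?A)" using Diff_infinite_finite[OF finA inf] .
  then obtain B0 where B0: "finite B0" "card B0 = card V" "B0 \<subseteq> UNIV - ?A"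
    using infinite_arbitrarily_large by blast
  obtain \<sigma>0 :: "'a \<Rightarrow> 'c" where s0: "\<sigma>0 ` V \<subseteq> B0" "inj_on \<sigma>0 V"
    using card_le_inj[OF finV B0(1)] B0(2) by auto
  have dis0: "\<sigma>0 ` V \<inter> ?A = {}" using s0(1) B0(3) by blast
  obtain vs where vs: "bottom_up_order T vs" using exists_bottom_up by blast
  have I0: "Inv2 \<sigma> \<sigma>0 {} \<sigma>0"
    unfolding Inv2_def Inv_base_def downclosed_def
  proof (intro conjI ballI impI)
    fix u assume u: "u \<in> subtrees T" "u \<in> {} \<or> \<not> is_inner u"
    then obtain x where x: "u = Leaf x" using leaf_cases by blast
    show "recol \<sigma> \<sigma>0 (leaves u)" unfolding recol_def x
      by (intro exI[of _ "\<lambda>_. \<sigma>0 x"]) simp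
  qed auto
  obtain \<sigma>f where r: "proc_run E \<sigma>0 vs \<sigma>f" "Inv2 \<sigma> \<sigma>0 ({} \<union> set vs) \<sigma>f"
    using run2[OF s0(2) G bottom_okl[OF vs] I0] by blast
  have sv: "set vs = {u \<in> subtrees T. is_inner u}" using vs unfolding bottom_up_order_def by blast
  have "recol \<sigma> \<sigma>f (leaves T)" using r(2) sv subtrees_refl[of T] unfolding Inv2_def by auto
  then obtain f where f: "inj_on f ?A" "\<forall>x\<in>V. \<sigma>f x = f (\<sigma> x)" unfolding recol_def leavesT by blast
  have tT: "top_ok (set vs) T" unfolding top_ok_def using sub_antisym by blast
  have "\<sigma>f ` leaves T \<subseteq> \<sigma>0 ` leaves T" using r(2) tT subtrees_refl[of T] unfolding Inv2_def Inv_base_def by auto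
  then have fA: "f ` ?A \<subseteq> \<sigma>0 ` V" using f(2) leavesT by force
  have disj: "f ` ?A \<inter> ?A = {}" using fA dis0 by blast
  define h where "h y = (if y \<in> f ` ?A then the_inv_into ?A f y else if y \<in> ?A then f y else y)" for y
  have hf: "h (f a) = a" if "a \<in> ?A" for a
    unfolding h_def using that f(1) by (simp add: the_inv_into_f_f)
  have hA: "h y \<in> ?A" if "y \<in> f ` ?A" for y using that hf by auto
  have inj: "inj h"
  proof (rule injI)
    fix y1 y2 assume e: "h y1 = h y2"
    consider "y1 \<in> f ` ?A" | "y1 \<notin> f ` ?A" "y1 \<in> ?A" | "y1 \<notin> f ` ?A" "y1 \<notin> ?A" by blast
    then show "y1 = y2"
    proof cases
      case 1
      then obtain a1 where a1: "a1 \<in> ?A" "y1 = f a1" by blast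
      have h1: "h y1 = a1" using hf a1 by simp
      consider "y2 \<in> f ` ?A" | "y2 \<notin> f ` ?A" "y2 \<in> ?A" | "y2 \<notin> f ` ?A" "y2 \<notin> ?A" by blast
      then show ?thesis
      proof cases
        case 1
        then obtain a2 where a2: "a2 \<in> ?A" "y2 = f a2" by blast
        then show ?thesis using h1 hf e a1 by simp
      next
        case 2
        then have "h y2 = f y2" unfolding h_def by simp
        then have "f y2 = a1" using h1 e by simp
        then have "a1 \<in> f ` ?A" using 2(2) by (metis imageI)
        then show ?thesis using disj a1(1) by blast
      next
        case 3
        then have "h y2 = y2" unfolding h_def by simp
        then show ?thesis using h1 e 3(2) a1(1) by simp
      qed
    next
      case 2
      note o2 = this
      then have h1: "h y1 = f y1" unfolding h_def by simp
      consider "y2 \<in> f ` ?A" | "y2 \<notin> f ` ?A" "y2 \<in> ?A" | "y2 \<notin> f ` ?A" "y2 \<notin> ?A" by blast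
      then show ?thesis
      proof cases
        case 1
        then obtain a2 where a2: "a2 \<in> ?A" "y2 = f a2" by blast
        then have "h y2 = a2" using hf by simp
        then have "f y1 \<in> ?A" using h1 e a2(1) by simp
        moreover have "f y1 \<in> f ` ?A" using o2(2) by (rule imageI)
        ultimately show ?thesis using disj by blast
      next
        case 2
        then have "h y2 = f y2" unfolding h_def by simp
        then have "f y1 = f y2" using h1 e by simp
        then show ?thesis using f(1) o2(2) 2(2) unfolding inj_on_def by blast
      next
        case 3
        then have "h y2 = y2" unfolding h_def by simp
        then have "y2 = f y1" using h1 e by simp
        then have "y2 \<in> f ` ?A" using o2(2) by simp
        then show ?thesis using 3(1) by contradiction
      qed
    next
      case 3
      note o3 = this
      then have h1: "h y1 = y1" unfolding h_def by simp
      consider "y2 \<in> f ` ?A" | "y2 \<notin> f ` ?A" "y2 \<in> ?A" | "y2 \<notin> f ` ?A" "y2 \<notin> ?A" by blast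
      then show ?thesis
      proof cases
        case 1
        then have "h y2 \<in> ?A" using hA by blast
        then show ?thesis using h1 e o3(2) by simp
      next
        case 2
        then have "h y2 = f y2" unfolding h_def by simp
        then have "y1 = f y2" using h1 e by simp
        then have "y1 \<in> f ` ?A" using 2(2) by simp
        then show ?thesis using o3(1) by contradiction
      next
        case 3
        then have "h y2 = y2" unfolding h_def by simp
        then show ?thesis using h1 e by simp
      qed
    qed
  qed
  have "proc_run E (h \<circ> \<sigma>0) vs (h \<circ> \<sigma>f)" using run_equiv[OF inj r(1)] .
  moreover have "inj_on (h \<circ> \<sigma>0) V" using s0(2) inj by (simp add: comp_inj_on inj_on_subset)
  ultimately have "procedure_output E V T (h \<circ> \<sigma>f)" unfolding procedure_output_def using vs by blast
  moreover have "\<forall>x\<in>V. (h \<circ> \<sigma>f) x = \<sigma> x" using f(2) hf by simp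
  ultimately show ?thesis by blast
qed

end

theorem theorem10:
  fixes E :: "'a \<Rightarrow> 'a \<Rightarrow> bool" and V :: "'a set" and T :: "'a cotree"
  assumes "graph E V" and "cograph E V" and "is_discriminating_cotree E V T"
  shows "(\<forall>\<sigma> :: 'a \<Rightarrow> 'c. procedure_output E V T \<sigma> \<longrightarrow> recursively_minimal E V \<sigma>)
       \<and> (infinite (UNIV :: 'c set) \<longrightarrow>
           (\<forall>\<sigma> :: 'a \<Rightarrow> 'c. recursively_minimal E V \<sigma> \<longrightarrow>
              (\<exists>\<sigma>'. procedure_output E V T \<sigma>' \<and> (\<forall>x\<in>V. \<sigma>' x = \<sigma> x))))"
proof -
  interpret ctx E V T by (rule ctx.intro[OF assms(1) assms(3)])
  show ?thesis using part1 part2 by blast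
qed

end
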